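(* Let $M$ be a 3-dimensional contact Sub-Riemannian manifold and $W=\{F=0\}$ a $\Delta$-minimal surface, $F\in C^2$, $dF\ne0$. Then the characteristic points of $W$ are either isolated or contained in a $C^1$ curve consisting of characteristic points.
   Context: $M$ is a smooth 3-manifold with a contact rank-2 distribution $\Delta$ with orthonormal frame $X_1,X_2$, canonical 1-form $\omega$ ($\omega(\Delta)=0$, $d\omega(X_1,X_2)=1$), Reeb field $X_3$ ($\omega(X_3)=1$, $d\omega(V,X_3)=0$ for $V\in\Delta$), structure functions $[X_i,X_j]=-\sum_kc_{ij}^kX_k$. A characteristic point of $W$ is a point where $X_1F=X_2F=0$ (i.e. $T_qW=\Delta_q$). $W$ is $\Delta$-minimal if, at all points of $W$ where $D_1=\sqrt{(X_1F)^2+(X_2F)^2}\ne0$, $\big(X_1^2F(X_2F)^2+X_2^2F(X_1F)^2-X_1FX_2F(X_1X_2+X_2X_1)F\big)D_1^{-3}+(c_{12}^2X_1F-c_{12}^1X_2F)D_1^{-1}=0$. *)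

theory Defs
  imports "HOL-Analysis.Analysis"
begin

fun Ck_on :: "nat \<Rightarrow> 'a::real_normed_vector set \<Rightarrow> ('a \<Rightarrow> 'b::real_normed_vector) \<Rightarrow> bool" where
  "Ck_on 0 U f = continuous_on U f"
| "Ck_on (Suc k) U f =
     (f differentiable_on U \<and> (\<forall>v. Ck_on k U (\<lambda>x. frechet_derivative f (at x) v)))"

definition smooth_on :: "'a::real_normed_vector set \<Rightarrow> ('a \<Rightarrow> 'b::real_normed_vector) \<Rightarrow> bool" where
  "smooth_on U f \<longleftrightarrow> (\<forall>k. Ck_on k U f)"

definition vf_apply :: "(real^3 \<Rightarrow> real^3) \<Rightarrow> (real^3 \<Rightarrow> real) \<Rightarrow> real^3 \<Rightarrow> real" where
  "vf_apply X g p = frechet_derivative g (at p) (X p)"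

text \<open>Lie bracket [X,Y], so that [X,Y]g = X(Y g) - Y(X g).\<close>
definition lie_bracket :: "(real^3 \<Rightarrow> real^3) \<Rightarrow> (real^3 \<Rightarrow> real^3) \<Rightarrow> real^3 \<Rightarrow> real^3" where
  "lie_bracket X Y p = frechet_derivative Y (at p) (X p) - frechet_derivative X (at p) (Y p)"

text \<open>A 1-form is represented by a covector field w (w_p(V) = w p \<bullet> V);
  its exterior derivative evaluated on V, Wv at p.\<close>
definition dform :: "(real^3 \<Rightarrow> real^3) \<Rightarrow> real^3 \<Rightarrow> real^3 \<Rightarrow> real^3 \<Rightarrow> real" where
  "dform w p V Wv = (frechet_derivative w (at p) V) \<bullet> Wv - (frechet_derivative w (at p) Wv) \<bullet> V"

text \<open>Delta-minimality of W = {F = 0} (within U), with c1 = c_12^1, c2 = c_12^2.\<close>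
definition Delta_minimal ::
  "(real^3) set \<Rightarrow> (real^3 \<Rightarrow> real^3) \<Rightarrow> (real^3 \<Rightarrow> real^3) \<Rightarrow> (real^3 \<Rightarrow> real) \<Rightarrow> (real^3 \<Rightarrow> real)
   \<Rightarrow> (real^3 \<Rightarrow> real) \<Rightarrow> bool" where
  "Delta_minimal U X1 X2 c1 c2 F \<longleftrightarrow>
     (\<forall>p\<in>U. F p = 0 \<longrightarrow>
        (let a = vf_apply X1 F p; b = vf_apply X2 F p; D1 = sqrt (a\<^sup>2 + b\<^sup>2) in
          D1 \<noteq> 0 \<longrightarrow>
          (vf_apply X1 (vf_apply X1 F) p * b\<^sup>2 + vf_apply X2 (vf_apply X2 F) p * a\<^sup>2
            - a * b * (vf_apply X1 (vf_apply X2 F) p + vf_apply X2 (vf_apply X1 F) p)) / D1 ^ 3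
          + (c2 p * a - c1 p * b) / D1 = 0))"

definition char_points :: "(real^3) set \<Rightarrow> (real^3 \<Rightarrow> real^3) \<Rightarrow> (real^3 \<Rightarrow> real^3) \<Rightarrow> (real^3 \<Rightarrow> real) \<Rightarrow> (real^3) set" where
  "char_points U X1 X2 F = {p\<in>U. F p = 0 \<and> vf_apply X1 F p = 0 \<and> vf_apply X2 F p = 0}"

end

theory Submission
  imports Defs
begin

definition C1 :: "(real^3) set \<Rightarrow> (real^3 \<Rightarrow> 'b::real_normed_vector) \<Rightarrow> (real^3 \<Rightarrow> real^3 \<Rightarrow> 'b) \<Rightarrow> bool" where
  "C1 U f f' \<longleftrightarrow> (\<forall>x\<in>U. (f has_derivative f' x) (at x)) \<and> (\<forall>v. continuous_on U (\<lambda>x. f' x v))"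

lemma C1_of_Ck:
  assumes "open U" "Ck_on (Suc 0) U f"
  shows "C1 U f (\<lambda>x. frechet_derivative f (at x))"
proof -
  have "f differentiable_on U" using assms(2) by simp
  then have "\<forall>x\<in>U. (f has_derivative frechet_derivative f (at x)) (at x)"
    using assms(1) by (metis differentiable_on_eq_differentiable_at frechet_derivative_works)
  moreover have "\<forall>v. continuous_on U (\<lambda>x. frechet_derivative f (at x) v)" using assms(2) by simp
  ultimately show ?thesis unfolding C1_def by blast
qed

lemma C1_linear: "C1 U f f' \<Longrightarrow> x \<in> U \<Longrightarrow> linear (f' x)"
  unfolding C1_def using has_derivative_linear by blast

lemma C1_cont: "C1 U f f' \<Longrightarrow> open U \<Longrightarrow> continuous_on U f"
  unfolding C1_def
  by (meson continuous_at_imp_continuous_on has_derivative_continuous)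

lemma lin_expand3:
  fixes L :: "real^3 \<Rightarrow> 'b::real_normed_vector"
  assumes "linear L"
  shows "L h = (h$1) *\<^sub>R L (axis 1 1) + (h$2) *\<^sub>R L (axis 2 1) + (h$3) *\<^sub>R L (axis 3 1)"
proof -
  have "h = (\<Sum>i\<in>UNIV. (h$i) *\<^sub>R axis i 1)"
    using basis_expansion[of h] by (simp add: scalar_mult_eq_scaleR)
  then have "L h = (\<Sum>i\<in>UNIV. (h$i) *\<^sub>R L (axis i 1))"
    by (metis (no_types, lifting) assms linear_scale linear_sum sum.cong)
  then show ?thesis by (simp add: sum_3)
qed

lemma opcont:
  fixes f' :: "real^3 \<Rightarrow> real^3 \<Rightarrow> 'b::real_normed_vector"
  assumes "C1 U f f'" "open U" "x \<in> U" "e > 0"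
  shows "\<forall>\<^sub>F y in nhds x. y \<in> U \<and> (\<forall>h. norm (f' y h - f' x h) \<le> e * norm h)"
proof -
  have c: "isCont (\<lambda>y. f' y v) x" for v
    using assms unfolding C1_def by (meson continuous_on_eq_continuous_at)
  have ev: "\<forall>\<^sub>F y in nhds x. norm (f' y v - f' x v) < e/3" for v
  proof -
    have "((\<lambda>y. f' y v) \<longlongrightarrow> f' x v) (nhds x)"
      using c[of v] tendsto_at_iff_tendsto_nhds isCont_def by blast
    then have "\<forall>\<^sub>F y in nhds x. dist (f' y v) (f' x v) < e/3"
      by (rule tendstoD) (use assms(4) in auto)
    then show ?thesis by (simp add: dist_norm)
  qed
  have U: "\<forall>\<^sub>F y in nhds x. y \<in> U" using assms(2,3) eventually_nhds by blast
  show ?thesis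
    using eventually_conj[OF U eventually_conj[OF ev[of "axis 1 1"] eventually_conj[OF ev[of "axis 2 1"] ev[of "axis 3 1"]]]]
  proof (rule eventually_mono, safe)
    fix y h assume y: "y \<in> U" and n1: "norm (f' y (axis 1 1) - f' x (axis 1 1)) < e / 3"
      and n2: "norm (f' y (axis 2 1) - f' x (axis 2 1)) < e / 3"
      and n3: "norm (f' y (axis 3 1) - f' x (axis 3 1)) < e / 3"
    have ly: "linear (f' y)" and lx: "linear (f' x)" using C1_linear assms y by blast+
    have "f' y h - f' x h = (h$1) *\<^sub>R (f' y (axis 1 1) - f' x (axis 1 1)) + (h$2) *\<^sub>R (f' y (axis 2 1) - f' x (axis 2 1))
        + (h$3) *\<^sub>R (f' y (axis 3 1) - f' x (axis 3 1))"
      using lin_expand3[OF ly, of h] lin_expand3[OF lx, of h] by (simp add: algebra_simps)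
    also have "norm \<dots> \<le> \<bar>h$1\<bar> * (e/3) + \<bar>h$2\<bar> * (e/3) + \<bar>h$3\<bar> * (e/3)"
    proof -
      have "norm ((h$i) *\<^sub>R (f' y (axis i 1) - f' x (axis i 1))) \<le> \<bar>h$i\<bar> * (e/3)"
        if "norm (f' y (axis i 1) - f' x (axis i 1)) < e / 3" for i
        using that mult_left_mono[of "norm (f' y (axis i 1) - f' x (axis i 1))" "e/3" "\<bar>h$i\<bar>"] by simp
      then show ?thesis using n1 n2 n3
        by (smt (verit, best) norm_triangle_ineq)
    qed
    also have "\<dots> \<le> norm h * (e/3) + norm h * (e/3) + norm h * (e/3)"
      using component_le_norm_cart[of h] assms(4)
      by (intro add_mono mult_right_mono) auto
    finally show "norm (f' y h - f' x h) \<le> e * norm h" by simp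
  qed
qed

lemma line_deriv:
  fixes g :: "real^3 \<Rightarrow> real"
  assumes "(g has_derivative g') (at (p + t *\<^sub>R w))"
  shows "((\<lambda>s. g (p + s *\<^sub>R w)) has_real_derivative g' w) (at t)"
proof -
  have l: "linear g'" using assms has_derivative_linear by blast
  have d1: "((\<lambda>s. p + s *\<^sub>R w) has_derivative (\<lambda>s. s *\<^sub>R w)) (at t)"
    by (auto intro!: derivative_eq_intros)
  have "((\<lambda>s. g (p + s *\<^sub>R w)) has_derivative (\<lambda>s. g' (s *\<^sub>R w))) (at t)"
    using has_derivative_compose[OF d1 assms] by (simp add: o_def)
  moreover have "(\<lambda>s. g' (s *\<^sub>R w)) = (*) (g' w)"
    using l by (auto simp: linear_scale mult.commute)
  ultimately show ?thesis by (simp add: has_field_derivative_def)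
qed

lemma schwarz_aux:
  fixes f :: "real^3 \<Rightarrow> real"
  assumes U: "ball x d \<subseteq> U" and f: "C1 U f Df" and f2: "\<And>v. C1 U (\<lambda>y. Df y v) (D2 v)"
    and h: "h > 0" "h * (norm u + norm v) < d"
  shows "\<exists>y\<in>ball x d. f (x + h *\<^sub>R u + h *\<^sub>R v) - f (x + h *\<^sub>R u) - f (x + h *\<^sub>R v) + f x = h * h * D2 u y v"
proof -
  have inb: "x + s *\<^sub>R u + t *\<^sub>R v \<in> ball x d" if "0 \<le> s" "s \<le> h" "0 \<le> t" "t \<le> h" for s t
  proof -
    have "norm (s *\<^sub>R u + t *\<^sub>R v) \<le> s * norm u + t * norm v"
      using that by (metis abs_of_nonneg norm_scaleR norm_triangle_ineq)
    also have "\<dots> \<le> h * norm u + h * norm v"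
      using that by (intro add_mono mult_right_mono) auto
    finally have "norm (s *\<^sub>R u + t *\<^sub>R v) < d" using h by (simp add: distrib_left)
    moreover have "dist x (x + s *\<^sub>R u + t *\<^sub>R v) = norm (s *\<^sub>R u + t *\<^sub>R v)"
      by (metis dist_norm norm_minus_commute add_diff_cancel_left' add.assoc)
    ultimately show ?thesis by simp
  qed
  define \<phi> where "\<phi> s = f (x + s *\<^sub>R u + h *\<^sub>R v) - f (x + s *\<^sub>R u)" for s
  have "DERIV \<phi> s :> Df (x + s *\<^sub>R u + h *\<^sub>R v) u - Df (x + s *\<^sub>R u) u" if "0 \<le> s" "s \<le> h" for s
  proof -
    have a1: "(f has_derivative Df (x + h *\<^sub>R v + s *\<^sub>R u)) (at ((x + h *\<^sub>R v) + s *\<^sub>R u))"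
      using f inb[of s h] that h U unfolding C1_def by (auto simp: algebra_simps)
    have a2: "(f has_derivative Df (x + s *\<^sub>R u)) (at (x + s *\<^sub>R u))"
      using f inb[of s 0] that h U unfolding C1_def by auto
    have "((\<lambda>s. f ((x + h *\<^sub>R v) + s *\<^sub>R u) - f (x + s *\<^sub>R u)) has_real_derivative
        Df (x + h *\<^sub>R v + s *\<^sub>R u) u - Df (x + s *\<^sub>R u) u) (at s)"
      by (intro DERIV_diff line_deriv a1 a2)
    then show ?thesis unfolding \<phi>_def by (simp add: algebra_simps)
  qed
  then obtain s1 where s1: "0 < s1" "s1 < h"
    "\<phi> h - \<phi> 0 = (h - 0) * (Df (x + s1 *\<^sub>R u + h *\<^sub>R v) u - Df (x + s1 *\<^sub>R u) u)"
    using MVT2[of 0 h \<phi> "\<lambda>s. Df (x + s *\<^sub>R u + h *\<^sub>R v) u - Df (x + s *\<^sub>R u) u"] h by auto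
  define \<psi> where "\<psi> t = Df (x + s1 *\<^sub>R u + t *\<^sub>R v) u" for t
  have "DERIV \<psi> t :> D2 u (x + s1 *\<^sub>R u + t *\<^sub>R v) v" if "0 \<le> t" "t \<le> h" for t
  proof -
    have "((\<lambda>y. Df y u) has_derivative D2 u (x + s1 *\<^sub>R u + t *\<^sub>R v)) (at ((x + s1 *\<^sub>R u) + t *\<^sub>R v))"
      using f2[of u] inb[of s1 t] that s1 U unfolding C1_def by auto
    from line_deriv[OF this] show ?thesis unfolding \<psi>_def .
  qed
  then obtain t1 where t1: "0 < t1" "t1 < h"
    "\<psi> h - \<psi> 0 = (h - 0) * D2 u (x + s1 *\<^sub>R u + t1 *\<^sub>R v) v"
    using MVT2[of 0 h \<psi> "\<lambda>t. D2 u (x + s1 *\<^sub>R u + t *\<^sub>R v) v"] h by auto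
  show ?thesis
  proof (intro bexI)
    show "x + s1 *\<^sub>R u + t1 *\<^sub>R v \<in> ball x d" using inb[of s1 t1] s1 t1 by auto
    show "f (x + h *\<^sub>R u + h *\<^sub>R v) - f (x + h *\<^sub>R u) - f (x + h *\<^sub>R v) + f x =
      h * h * D2 u (x + s1 *\<^sub>R u + t1 *\<^sub>R v) v"
      using s1(3) t1(3) unfolding \<phi>_def \<psi>_def by (simp add: algebra_simps)
  qed
qed

lemma schwarz:
  fixes f :: "real^3 \<Rightarrow> real"
  assumes U: "open U" "x \<in> U" and f: "C1 U f Df" and f2: "\<And>v. C1 U (\<lambda>y. Df y v) (D2 v)"
  shows "D2 u x v = D2 v x u"
proof (rule ccontr)
  assume ne: "D2 u x v \<noteq> D2 v x u"
  define e where "e = \<bar>D2 u x v - D2 v x u\<bar> / 3"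
  have e: "e > 0" using ne by (simp add: e_def)
  have cu: "isCont (\<lambda>y. D2 u y v) x" and cv: "isCont (\<lambda>y. D2 v y u) x"
    using f2 U unfolding C1_def by (meson continuous_on_eq_continuous_at)+
  obtain d1 where d1: "d1 > 0" "\<And>y. dist y x < d1 \<Longrightarrow> dist (D2 u y v) (D2 u x v) < e"
    using cu e unfolding continuous_at_eps_delta by blast
  obtain d2 where d2: "d2 > 0" "\<And>y. dist y x < d2 \<Longrightarrow> dist (D2 v y u) (D2 v x u) < e"
    using cv e unfolding continuous_at_eps_delta by blast
  obtain d3 where d3: "d3 > 0" "ball x d3 \<subseteq> U" using U open_contains_ball by blast
  define d where "d = min d1 (min d2 d3)"
  have d: "d > 0" "ball x d \<subseteq> U" using d1 d2 d3 by (auto simp: d_def)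
  define h where "h = d / (2 * (norm u + norm v + 1))"
  have "norm u + norm v + 1 > 0" by (smt (verit) norm_ge_zero)
  then have hpos: "h > 0" using d unfolding h_def by (intro divide_pos_pos) auto
  have hlt: "h * (norm u + norm v) < d"
  proof -
    have "h * (norm u + norm v) \<le> h * (norm u + norm v + 1)" using hpos by simp
    also have "\<dots> = d / 2" unfolding h_def using \<open>norm u + norm v + 1 > 0\<close> by (simp add: field_simps)
    finally show ?thesis using d by simp
  qed
  obtain y1 where y1: "y1 \<in> ball x d"
    "f (x + h *\<^sub>R u + h *\<^sub>R v) - f (x + h *\<^sub>R u) - f (x + h *\<^sub>R v) + f x = h * h * D2 u y1 v"
    using schwarz_aux[OF d(2) f f2 hpos hlt] by blast
  obtain y2 where y2: "y2 \<in> ball x d"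
    "f (x + h *\<^sub>R v + h *\<^sub>R u) - f (x + h *\<^sub>R v) - f (x + h *\<^sub>R u) + f x = h * h * D2 v y2 u"
    using schwarz_aux[OF d(2) f f2 hpos, of v u] hlt by (auto simp: add.commute)
  have "h * h * D2 u y1 v = h * h * D2 v y2 u" using y1(2) y2(2) by (simp add: algebra_simps)
  then have eq: "D2 u y1 v = D2 v y2 u" using hpos by simp
  have "dist (D2 u y1 v) (D2 u x v) < e" using d1(2)[of y1] y1(1) by (auto simp: d_def dist_commute)
  moreover have "dist (D2 v y2 u) (D2 v x u) < e" using d2(2)[of y2] y2(1) by (auto simp: d_def dist_commute)
  ultimately have "\<bar>D2 u x v - D2 v x u\<bar> < 2 * e" using eq by (simp add: dist_real_def)
  then show False using e unfolding e_def by simp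
qed

lemma C1_at: "C1 U f f' \<Longrightarrow> x \<in> U \<Longrightarrow> (f has_derivative f' x) (at x)"
  unfolding C1_def by blast

lemma C1_fd: "C1 U f f' \<Longrightarrow> x \<in> U \<Longrightarrow> frechet_derivative f (at x) = f' x"
  by (metis C1_at frechet_derivative_at)

lemma cont_apply:
  fixes f' :: "real^3 \<Rightarrow> real^3 \<Rightarrow> 'b::real_normed_vector"
  assumes "C1 U f f'" "continuous_on U Z"
  shows "continuous_on U (\<lambda>x. f' x (Z x))"
proof -
  have e: "f' x (Z x) = (Z x$1) *\<^sub>R f' x (axis 1 1) + (Z x$2) *\<^sub>R f' x (axis 2 1) + (Z x$3) *\<^sub>R f' x (axis 3 1)"
    if "x \<in> U" for x using lin_expand3[OF C1_linear[OF assms(1) that]] .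
  have c: "continuous_on U (\<lambda>x. f' x v)" for v using assms(1) unfolding C1_def by blast
  have zc: "continuous_on U (\<lambda>x. Z x $ i)" for i
    using assms(2) by (intro continuous_intros)
  have "continuous_on U (\<lambda>x. (Z x$1) *\<^sub>R f' x (axis 1 1) + (Z x$2) *\<^sub>R f' x (axis 2 1) + (Z x$3) *\<^sub>R f' x (axis 3 1))"
    by (intro continuous_intros zc c)
  then show ?thesis using e continuous_on_cong by (metis (no_types, lifting))
qed

lemma C1_comp_deriv:
  fixes X :: "real^3 \<Rightarrow> real^3"
  assumes "C1 U X DX" "x \<in> U"
  shows "((\<lambda>y. X y $ i) has_derivative (\<lambda>h. DX x h $ i)) (at x)"
  using bounded_linear.has_derivative[OF bounded_linear_vec_nth C1_at[OF assms]] .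

lemma vf_C1:
  fixes F :: "real^3 \<Rightarrow> real" and X :: "real^3 \<Rightarrow> real^3"
  assumes U: "open U" and F: "C1 U F DF" and F2: "\<And>v. C1 U (\<lambda>y. DF y v) (D2 v)"
    and X: "C1 U X DX"
  shows "C1 U (\<lambda>x. DF x (X x))
     (\<lambda>x h. DF x (DX x h) + (X x$1) * D2 (axis 1 1) x h + (X x$2) * D2 (axis 2 1) x h + (X x$3) * D2 (axis 3 1) x h)"
  unfolding C1_def
proof (intro conjI ballI allI)
  fix x assume x: "x \<in> U"
  define G where "G y = (X y$1) * DF y (axis 1 1) + (X y$2) * DF y (axis 2 1) + (X y$3) * DF y (axis 3 1)" for y
  have eqG: "DF y (X y) = G y" if "y \<in> U" for y
    using lin_expand3[OF C1_linear[OF F that], of "X y"] by (simp add: G_def)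
  have m: "((\<lambda>y. X y$i * DF y e) has_derivative (\<lambda>h. X x$i * D2 e x h + DX x h$i * DF x e)) (at x)" for i e
    by (rule has_derivative_mult[OF C1_comp_deriv[OF X x] C1_at[OF F2 x]])
  have dG: "(G has_derivative (\<lambda>h. (X x$1 * D2 (axis 1 1) x h + DX x h$1 * DF x (axis 1 1))
      + (X x$2 * D2 (axis 2 1) x h + DX x h$2 * DF x (axis 2 1))
      + (X x$3 * D2 (axis 3 1) x h + DX x h$3 * DF x (axis 3 1)))) (at x)"
    unfolding G_def by (intro has_derivative_add m)
  have lin: "DF x (DX x h) = (DX x h$1) * DF x (axis 1 1) + (DX x h$2) * DF x (axis 2 1) + (DX x h$3) * DF x (axis 3 1)" for h
    using lin_expand3[OF C1_linear[OF F x], of "DX x h"] by simp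
  have dG': "(G has_derivative (\<lambda>h. DF x (DX x h) + (X x$1) * D2 (axis 1 1) x h + (X x$2) * D2 (axis 2 1) x h + (X x$3) * D2 (axis 3 1) x h)) (at x)"
    by (rule has_derivative_eq_rhs[OF dG]) (simp add: lin algebra_simps)
  show "((\<lambda>x. DF x (X x)) has_derivative (\<lambda>h. DF x (DX x h) + (X x$1) * D2 (axis 1 1) x h + (X x$2) * D2 (axis 2 1) x h + (X x$3) * D2 (axis 3 1) x h)) (at x)"
    by (rule has_derivative_transform_within_open[OF dG' U x]) (simp add: eqG)
next
  fix v
  have cX: "continuous_on U X" using C1_cont[OF X U] .
  have c1: "continuous_on U (\<lambda>x. DF x (DX x v))"
  proof -
    have "continuous_on U (\<lambda>x. DX x v)" using X unfolding C1_def by blast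
    then show ?thesis using cont_apply[OF F] by blast
  qed
  have c2: "continuous_on U (\<lambda>x. D2 w x v)" for w using F2[of w] unfolding C1_def by blast
  show "continuous_on U (\<lambda>x. DF x (DX x v) + (X x$1) * D2 (axis 1 1) x v + (X x$2) * D2 (axis 2 1) x v + (X x$3) * D2 (axis 3 1) x v)"
    by (intro continuous_intros c1 c2 cX)
qed

lemma C1_lincomb:
  fixes f g :: "real^3 \<Rightarrow> real"
  assumes "C1 U f f'" "C1 U g g'"
  shows "C1 U (\<lambda>x. \<alpha> * f x + \<beta> * g x) (\<lambda>x h. \<alpha> * f' x h + \<beta> * g' x h)"
  using assms unfolding C1_def
  by (auto intro!: derivative_eq_intros continuous_intros)

definition tri :: "(real^3 \<Rightarrow> real) \<Rightarrow> (real^3 \<Rightarrow> real) \<Rightarrow> (real^3 \<Rightarrow> real) \<Rightarrow> real^3 \<Rightarrow> real^3" where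
  "tri f1 f2 f3 x = f1 x *\<^sub>R axis 1 1 + f2 x *\<^sub>R axis 2 1 + f3 x *\<^sub>R axis 3 1"

definition trid :: "(real^3 \<Rightarrow> real^3 \<Rightarrow> real) \<Rightarrow> (real^3 \<Rightarrow> real^3 \<Rightarrow> real) \<Rightarrow> (real^3 \<Rightarrow> real^3 \<Rightarrow> real) \<Rightarrow> real^3 \<Rightarrow> real^3 \<Rightarrow> real^3" where
  "trid d1 d2 d3 x h = d1 x h *\<^sub>R axis 1 1 + d2 x h *\<^sub>R axis 2 1 + d3 x h *\<^sub>R axis 3 1"

lemma tri_comp [simp]: "tri f1 f2 f3 x $ 1 = f1 x" "tri f1 f2 f3 x $ 2 = f2 x" "tri f1 f2 f3 x $ 3 = f3 x"
  by (simp_all add: tri_def axis_def)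

lemma trid_comp [simp]: "trid d1 d2 d3 x h $ 1 = d1 x h" "trid d1 d2 d3 x h $ 2 = d2 x h" "trid d1 d2 d3 x h $ 3 = d3 x h"
  by (simp_all add: trid_def axis_def)

lemma vec3_eq: "(v::real^3) = w \<longleftrightarrow> v$1 = w$1 \<and> v$2 = w$2 \<and> v$3 = w$3"
  by (simp add: vec_eq_iff forall_3)

lemma axis_comp [simp]: "axis (1::3) (1::real) $ 1 = 1" "axis (1::3) (1::real) $ 2 = 0" "axis (1::3) (1::real) $ 3 = 0"
  "axis (2::3) (1::real) $ 1 = 0" "axis (2::3) (1::real) $ 2 = 1" "axis (2::3) (1::real) $ 3 = 0"
  "axis (3::3) (1::real) $ 1 = 0" "axis (3::3) (1::real) $ 2 = 0" "axis (3::3) (1::real) $ 3 = 1"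
  by (simp_all add: axis_def)

lemma C1_tri:
  assumes "C1 U f1 d1" "C1 U f2 d2" "C1 U f3 d3"
  shows "C1 U (tri f1 f2 f3) (trid d1 d2 d3)"
  using assms unfolding C1_def tri_def[abs_def] trid_def[abs_def]
  by (auto intro!: derivative_eq_intros continuous_intros)

lemma ift3:
  fixes f1 f2 f3 :: "real^3 \<Rightarrow> real"
  assumes U: "open U" "q \<in> U" and C: "C1 U f1 d1" "C1 U f2 d2" "C1 U f3 d3"
    and inj: "\<And>h. d1 q h = 0 \<Longrightarrow> d2 q h = 0 \<Longrightarrow> d3 q h = 0 \<Longrightarrow> h = 0"
    and r: "r > 0"
  obtains U' V g g' c where "open U'" "q \<in> U'" "U' \<subseteq> U \<inter> ball q r" "open V" "tri f1 f2 f3 q \<in> V"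
    "homeomorphism U' V (tri f1 f2 f3) g"
    "\<And>y. y \<in> V \<Longrightarrow> (g has_derivative g' y) (at y)"
    "\<And>y k. y \<in> V \<Longrightarrow> trid d1 d2 d3 (g y) (g' y k) = k"
    "c > 0" "\<And>x k. x \<in> U' \<Longrightarrow> c * norm k \<le> norm (trid d1 d2 d3 x k)"
proof -
  define P where "P = tri f1 f2 f3"
  define DP where "DP = trid d1 d2 d3"
  have CP: "C1 U P DP" unfolding P_def DP_def by (rule C1_tri[OF C])
  have linq: "linear (DP q)" using C1_linear[OF CP U(2)] .
  have injq: "inj (DP q)"
  proof -
    have "h = 0" if "DP q h = 0" for h
    proof -
      have "d1 q h = 0" "d2 q h = 0" "d3 q h = 0"
        using arg_cong[OF that, of "\<lambda>v. v$1"] arg_cong[OF that, of "\<lambda>v. v$2"] arg_cong[OF that, of "\<lambda>v. v$3"]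
        by (simp_all add: DP_def)
      then show ?thesis using inj by blast
    qed
    then show ?thesis using linq linear_injective_0 by blast
  qed
  obtain B where B: "B > 0" "\<And>h. B * norm h \<le> norm (DP q h)"
    using linear_inj_bounded_below_pos[OF linq injq] by blast
  have "\<forall>\<^sub>F y in nhds q. y \<in> U \<and> (\<forall>h. norm (DP y h - DP q h) \<le> (B/2) * norm h)"
    by (rule opcont[OF CP U(1) U(2)]) (use B in simp)
  then obtain r1 where r1: "r1 > 0" "\<And>y. dist y q < r1 \<Longrightarrow> y \<in> U \<and> (\<forall>h. norm (DP y h - DP q h) \<le> (B/2) * norm h)"
    unfolding eventually_nhds_metric by blast
  define U0 where "U0 = ball q (min r r1)"
  have U0: "open U0" "q \<in> U0" "U0 \<subseteq> U" "U0 \<subseteq> ball q r" using r r1 by (auto simp: U0_def dist_commute)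
  have lowb: "(B/2) * norm k \<le> norm (DP x k)" if "x \<in> U0" for x k
  proof -
    have "norm (DP x k - DP q k) \<le> (B/2) * norm k" using r1(2)[of x] that by (auto simp: U0_def dist_commute)
    then show ?thesis using B(2)[of k] norm_triangle_ineq2[of "DP q k" "DP x k"]
      by (simp add: norm_minus_commute)
  qed
  have bl: "bounded_linear (DP x)" if "x \<in> U" for x
    using C1_at[OF CP that] has_derivative_bounded_linear by blast
  have derf: "(P has_derivative blinfun_apply (Blinfun (DP x))) (at x)" if "x \<in> U0" for x
    using C1_at[OF CP] bl U0 that by (auto simp: bounded_linear_Blinfun_apply)
  have contf: "continuous_on U0 (\<lambda>x. Blinfun (DP x))"
  proof (rule continuous_at_imp_continuous_on, rule ballI)
    fix x assume x: "x \<in> U0"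
    then have xU: "x \<in> U" using U0 by auto
    have "((\<lambda>y. Blinfun (DP y)) \<longlongrightarrow> Blinfun (DP x)) (nhds x)"
    proof (rule tendstoI)
      fix e :: real assume e: "e > 0"
      have "\<forall>\<^sub>F y in nhds x. y \<in> U \<and> (\<forall>h. norm (DP y h - DP x h) \<le> (e/2) * norm h)"
        by (rule opcont[OF CP U(1) xU]) (use e in simp)
      then show "\<forall>\<^sub>F y in nhds x. dist (Blinfun (DP y)) (Blinfun (DP x)) < e"
      proof (rule eventually_mono)
        fix y assume y: "y \<in> U \<and> (\<forall>h. norm (DP y h - DP x h) \<le> (e/2) * norm h)"
        have "norm (Blinfun (DP y) - Blinfun (DP x)) \<le> e/2"
          using y e bl[OF xU] bl[of y] by (intro norm_blinfun_bound) (auto simp: blinfun.diff_left bounded_linear_Blinfun_apply)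
        then show "dist (Blinfun (DP y)) (Blinfun (DP x)) < e" using e by (simp add: dist_norm)
      qed
    qed
    then show "isCont (\<lambda>x. Blinfun (DP x)) x"
      unfolding isCont_def using tendsto_at_iff_tendsto_nhds by blast
  qed
  obtain g0 where g0: "linear g0" "g0 \<circ> DP q = id"
    using linear_injective_left_inverse[OF linq injq] by blast
  have blg0: "bounded_linear g0" using g0(1) linear_conv_bounded_linear by blast
  have invf: "Blinfun g0 o\<^sub>L Blinfun (DP q) = id_blinfun"
    by (rule blinfun_eqI) (use g0 blg0 bl[OF U(2)] in \<open>auto simp: bounded_linear_Blinfun_apply fun_eq_iff\<close>)
  obtain U' V g g' where res: "open U'" "U' \<subseteq> U0" "q \<in> U'" "open V" "P q \<in> V" "homeomorphism U' V P g"
    "\<And>y. y \<in> V \<Longrightarrow> (g has_derivative (g' y)) (at y)"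
    "\<And>y. y \<in> V \<Longrightarrow> g' y = inv (blinfun_apply (Blinfun (DP (g y))))"
    "\<And>y. y \<in> V \<Longrightarrow> bij (blinfun_apply (Blinfun (DP (g y))))"
    using inverse_function_theorem[OF U0(1) derf contf U0(2) invf] by blast
  have gU: "g y \<in> U'" if "y \<in> V" for y
    using res(6) that unfolding homeomorphism_def by blast
  have eqk: "DP (g y) (g' y k) = k" if "y \<in> V" for y k
  proof -
    have "g y \<in> U" using gU[OF that] res(2) U0 by auto
    then have "blinfun_apply (Blinfun (DP (g y))) = DP (g y)" using bl bounded_linear_Blinfun_apply by blast
    then show ?thesis using res(8)[OF that] res(9)[OF that] by (simp add: bij_is_surj surj_f_inv_f)
  qed
  show ?thesis
  proof (rule that[of U' V g g' "B/2"])
    show "U' \<subseteq> U \<inter> ball q r" using res(2) U0 by auto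
    show "\<And>x k. x \<in> U' \<Longrightarrow> B / 2 * norm k \<le> norm (trid d1 d2 d3 x k)"
      using lowb res(2) unfolding DP_def by blast
  qed (use res eqk B(1) in \<open>auto simp: P_def DP_def\<close>)
qed

locale SR =
  fixes U :: "(real^3) set"
    and X1 X2 X3 w :: "real^3 \<Rightarrow> real^3"
    and c1 c2 c3 F :: "real^3 \<Rightarrow> real"
  assumes U_open: "open U"
    and smooth: "smooth_on U X1" "smooth_on U X2" "smooth_on U X3" "smooth_on U w"
    and frame: "\<And>p a b. p \<in> U \<Longrightarrow> a *\<^sub>R X1 p + b *\<^sub>R X2 p = 0 \<Longrightarrow> a = 0 \<and> b = 0"
    and omega: "\<And>p. p \<in> U \<Longrightarrow> w p \<bullet> X1 p = 0 \<and> w p \<bullet> X2 p = 0 \<and> dform w p (X1 p) (X2 p) = 1"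
    and reeb: "\<And>p. p \<in> U \<Longrightarrow> w p \<bullet> X3 p = 1 \<and> dform w p (X1 p) (X3 p) = 0 \<and> dform w p (X2 p) (X3 p) = 0"
    and struct_fns: "\<And>p. p \<in> U \<Longrightarrow>
        lie_bracket X1 X2 p = - (c1 p *\<^sub>R X1 p + c2 p *\<^sub>R X2 p + c3 p *\<^sub>R X3 p)"
    and F_C2: "Ck_on 2 U F"
    and dF: "\<And>p. p \<in> U \<Longrightarrow> F p = 0 \<Longrightarrow> frechet_derivative F (at p) \<noteq> (\<lambda>v. 0)"
    and minimal: "Delta_minimal U X1 X2 c1 c2 F"
begin

abbreviation "DF x \<equiv> frechet_derivative F (at x)"
abbreviation "D2 v x \<equiv> frechet_derivative (\<lambda>y. DF y v) (at x)"
abbreviation "DX1 x \<equiv> frechet_derivative X1 (at x)"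
abbreviation "DX2 x \<equiv> frechet_derivative X2 (at x)"
abbreviation "DX3 x \<equiv> frechet_derivative X3 (at x)"
abbreviation "Dw x \<equiv> frechet_derivative w (at x)"

definition Dv :: "(real^3 \<Rightarrow> real^3) \<Rightarrow> (real^3 \<Rightarrow> real^3 \<Rightarrow> real^3) \<Rightarrow> real^3 \<Rightarrow> real^3 \<Rightarrow> real" where
  "Dv X DX x h = DF x (DX x h) + (X x$1) * D2 (axis 1 1) x h + (X x$2) * D2 (axis 2 1) x h + (X x$3) * D2 (axis 3 1) x h"

abbreviation "a \<equiv> vf_apply X1 F"
abbreviation "b \<equiv> vf_apply X2 F"
abbreviation "Da \<equiv> Dv X1 DX1"
abbreviation "Db \<equiv> Dv X2 DX2"

lemma CF: "C1 U F DF" and CF2: "C1 U (\<lambda>y. DF y v) (D2 v)"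
proof -
  have c2: "Ck_on (Suc (Suc 0)) U F" using F_C2 by (simp add: numeral_2_eq_2)
  then have d: "F differentiable_on U" and k1: "\<And>v. Ck_on (Suc 0) U (\<lambda>x. DF x v)" by auto
  show "C1 U (\<lambda>y. DF y v) (D2 v)" using C1_of_Ck[OF U_open k1] .
  have "\<forall>x\<in>U. (F has_derivative DF x) (at x)"
    using d U_open by (metis differentiable_on_eq_differentiable_at frechet_derivative_works)
  moreover have "continuous_on U (\<lambda>x. DF x v)" for v
    using k1[of v] by (simp add: differentiable_imp_continuous_on)
  ultimately show "C1 U F DF" unfolding C1_def by blast
qed

lemma CX_gen: "smooth_on U X \<Longrightarrow> C1 U X (\<lambda>x. frechet_derivative X (at x))"
  unfolding smooth_on_def using C1_of_Ck[OF U_open] by blast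

lemma CX1: "C1 U X1 DX1" and CX2: "C1 U X2 DX2" and CX3: "C1 U X3 DX3" and Cw: "C1 U w Dw"
  using CX_gen smooth by blast+

lemma vf_eq: "vf_apply X F = (\<lambda>x. DF x (X x))"
  by (simp add: vf_apply_def[abs_def])

lemma Cvf: "C1 U X DX \<Longrightarrow> C1 U (vf_apply X F) (Dv X DX)"
  unfolding vf_eq Dv_def[abs_def] using vf_C1[OF U_open CF CF2] by blast

lemma Ca: "C1 U a Da" and Cb: "C1 U b Db"
  using Cvf CX1 CX2 by blast+

lemma vf2: "C1 U f f' \<Longrightarrow> x \<in> U \<Longrightarrow> vf_apply Y f x = f' x (Y x)"
  unfolding vf_apply_def using C1_fd by metis

lemma bracket:
  assumes x: "x \<in> U"
  shows "Da x (X2 x) - Db x (X1 x) = DF x (DX1 x (X2 x)) - DF x (DX2 x (X1 x))"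
proof -
  have s: "D2 (axis i 1) x (axis j 1) = D2 (axis j 1) x (axis i 1)" for i j :: 3
    by (rule schwarz[OF U_open x CF CF2])
  have l: "D2 (axis i 1) x h = (h$1) * D2 (axis i 1) x (axis 1 1) + (h$2) * D2 (axis i 1) x (axis 2 1) + (h$3) * D2 (axis i 1) x (axis 3 1)" for i h
    using lin_expand3[OF C1_linear[OF CF2[of "axis i 1"] x], of h] by simp
  show ?thesis
    unfolding Dv_def l[where h="X1 x"] l[where h="X2 x"]
    using s[of 1 2] s[of 1 3] s[of 2 3]
    by (simp add: algebra_simps)
qed

lemma deriv_zero_on:
  fixes f :: "real^3 \<Rightarrow> real"
  assumes "\<And>p. p \<in> U \<Longrightarrow> f p = 0" "x \<in> U" "(f has_derivative f') (at x)"
  shows "f' h = 0"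
proof -
  have "((\<lambda>p. 0::real) has_derivative (\<lambda>h. 0)) (at x)" by simp
  then have "(f has_derivative (\<lambda>h. 0)) (at x)"
    by (rule has_derivative_transform_within_open[OF _ U_open assms(2)]) (use assms(1) in simp)
  then have "f' = (\<lambda>h. 0)" using has_derivative_unique assms(3) by blast
  then show ?thesis by simp
qed

lemma wX_deriv:
  assumes x: "x \<in> U"
  shows "Dw x h \<bullet> X1 x + w x \<bullet> DX1 x h = 0" "Dw x h \<bullet> X2 x + w x \<bullet> DX2 x h = 0"
proof -
  have "((\<lambda>p. w p \<bullet> X1 p) has_derivative (\<lambda>h. w x \<bullet> DX1 x h + Dw x h \<bullet> X1 x)) (at x)"
    by (rule has_derivative_inner[OF C1_at[OF Cw x] C1_at[OF CX1 x]])
  from deriv_zero_on[OF _ x this] omega show "Dw x h \<bullet> X1 x + w x \<bullet> DX1 x h = 0" by (simp add: add.commute)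
  have "((\<lambda>p. w p \<bullet> X2 p) has_derivative (\<lambda>h. w x \<bullet> DX2 x h + Dw x h \<bullet> X2 x)) (at x)"
    by (rule has_derivative_inner[OF C1_at[OF Cw x] C1_at[OF CX2 x]])
  from deriv_zero_on[OF _ x this] omega show "Dw x h \<bullet> X2 x + w x \<bullet> DX2 x h = 0" by (simp add: add.commute)
qed

lemma neg_lie: "x \<in> U \<Longrightarrow> - lie_bracket X1 X2 x = c1 x *\<^sub>R X1 x + c2 x *\<^sub>R X2 x + c3 x *\<^sub>R X3 x"
  using struct_fns by (metis minus_minus)

lemma c3_one:
  assumes x: "x \<in> U"
  shows "c3 x = 1"
proof -
  have e1: "Dw x (X2 x) \<bullet> X1 x = - (w x \<bullet> DX1 x (X2 x))" using wX_deriv(1)[OF x, of "X2 x"] by simp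
  have e2: "Dw x (X1 x) \<bullet> X2 x = - (w x \<bullet> DX2 x (X1 x))" using wX_deriv(2)[OF x, of "X1 x"] by simp
  have "1 = dform w x (X1 x) (X2 x)" using omega[OF x] by simp
  also have "\<dots> = w x \<bullet> (DX1 x (X2 x) - DX2 x (X1 x))"
    unfolding dform_def using e1 e2 by (simp add: inner_diff_right)
  also have "\<dots> = - (w x \<bullet> lie_bracket X1 X2 x)"
    unfolding lie_bracket_def by (simp add: inner_diff_right)
  also have "\<dots> = w x \<bullet> (- lie_bracket X1 X2 x)" by simp
  also have "\<dots> = w x \<bullet> (c1 x *\<^sub>R X1 x + c2 x *\<^sub>R X2 x + c3 x *\<^sub>R X3 x)"
    using neg_lie[OF x] by simp
  also have "\<dots> = c3 x"
    using omega[OF x] reeb[OF x] by (simp add: inner_add_right)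
  finally show ?thesis by simp
qed

lemma span3:
  assumes x: "x \<in> U"
  shows "\<exists>t1 t2 t3. h = t1 *\<^sub>R X1 x + t2 *\<^sub>R X2 x + t3 *\<^sub>R X3 x"
proof -
  define T where "T v = (v$1) *\<^sub>R X1 x + (v$2) *\<^sub>R X2 x + (v$3) *\<^sub>R X3 x" for v :: "real^3"
  have lT: "linear T" unfolding T_def by (intro linearI) (auto simp: algebra_simps)
  have "v = 0" if "T v = 0" for v
  proof -
    have "w x \<bullet> T v = v$3" using omega[OF x] reeb[OF x] by (simp add: T_def inner_add_right)
    then have v3: "v$3 = 0" using that by simp
    then have "(v$1) *\<^sub>R X1 x + (v$2) *\<^sub>R X2 x = 0" using that by (simp add: T_def)
    then have "v$1 = 0 \<and> v$2 = 0" using frame[OF x] by blast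
    then show ?thesis using v3 by (simp add: vec3_eq)
  qed
  then have "inj T" using lT linear_injective_0 by blast
  then have "surj T" using lT linear_injective_imp_surjective by blast
  then obtain v where "h = T v" by (metis surjD)
  then show ?thesis unfolding T_def by blast
qed

lemma DF_X3:
  assumes x: "x \<in> U" "F x = 0" "a x = 0" "b x = 0"
  shows "DF x (X3 x) \<noteq> 0"
proof
  assume z: "DF x (X3 x) = 0"
  have l: "linear (DF x)" using C1_linear[OF CF x(1)] .
  have "DF x h = 0" for h
  proof -
    obtain t1 t2 t3 where h: "h = t1 *\<^sub>R X1 x + t2 *\<^sub>R X2 x + t3 *\<^sub>R X3 x" using span3[OF x(1)] by blast
    have "DF x h = t1 * DF x (X1 x) + t2 * DF x (X2 x) + t3 * DF x (X3 x)"
      unfolding h using l by (simp add: linear_add linear_scale)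
    then show ?thesis using z x(3,4) by (simp add: vf_apply_def)
  qed
  then have "DF x = (\<lambda>v. 0)" by auto
  then show False using dF x by blast
qed

lemma kappa:
  assumes x: "x \<in> U" "F x = 0" "a x = 0" "b x = 0"
  shows "Da x (X2 x) - Db x (X1 x) = DF x (X3 x)"
proof -
  have l: "linear (DF x)" using C1_linear[OF CF x(1)] .
  have "Da x (X2 x) - Db x (X1 x) = - DF x (lie_bracket X1 X2 x)"
    unfolding bracket[OF x(1)] lie_bracket_def using l by (simp add: linear_diff)
  also have "\<dots> = DF x (- lie_bracket X1 X2 x)" using l by (simp add: linear_neg)
  also have "\<dots> = DF x (c1 x *\<^sub>R X1 x + c2 x *\<^sub>R X2 x + c3 x *\<^sub>R X3 x)"
    using neg_lie[OF x(1)] by simp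
  also have "\<dots> = c1 x * DF x (X1 x) + c2 x * DF x (X2 x) + c3 x * DF x (X3 x)"
    using l by (simp add: linear_add linear_scale)
  also have "\<dots> = DF x (X3 x)" using x c3_one[OF x(1)] by (simp add: vf_apply_def)
  finally show ?thesis .
qed

end

lemma solve2:
  fixes d11 d12 d21 d22 t1 t2 :: real
  assumes "d11 * t1 + d12 * t2 = 0" "d21 * t1 + d22 * t2 = 0" "d11 * d22 - d12 * d21 \<noteq> 0"
  shows "t1 = 0 \<and> t2 = 0"
proof -
  have "(d11 * d22 - d12 * d21) * t1 = d22 * (d11 * t1 + d12 * t2) - d12 * (d21 * t1 + d22 * t2)" by algebra
  then have 1: "t1 = 0" using assms by simp
  have "(d11 * d22 - d12 * d21) * t2 = d11 * (d21 * t1 + d22 * t2) - d21 * (d11 * t1 + d12 * t2)" by algebra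
  then have "t2 = 0" using assms by simp
  with 1 show ?thesis by simp
qed

lemma alg_det0:
  fixes k11 k12 k21 k22 :: real
  assumes "k11 * k22 - k12 * k21 = 0" "k12 - k21 \<noteq> 0"
  shows "\<exists>\<alpha> \<beta>. (\<alpha> \<noteq> 0 \<or> \<beta> \<noteq> 0) \<and> \<alpha> * k11 + \<beta> * k21 = 0 \<and> \<alpha> * k12 + \<beta> * k22 = 0"
proof (cases "k11 = 0 \<and> k21 = 0")
  case True
  then show ?thesis using assms by (intro exI[of _ k22] exI[of _ "- k12"]) auto
next
  case False
  then show ?thesis using assms
    by (intro exI[of _ k21] exI[of _ "- k11"]) (auto simp: algebra_simps)
qed

lemma alg_lam:
  fixes k11 k12 k21 k22 \<alpha> \<beta> :: real
  assumes "\<alpha> * k11 + \<beta> * k21 = 0" "\<alpha> * k12 + \<beta> * k22 = 0" "\<alpha> \<noteq> 0 \<or> \<beta> \<noteq> 0" "k12 - k21 \<noteq> 0"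
  shows "\<beta> * k11 - \<alpha> * k21 \<noteq> 0 \<or> \<beta> * k12 - \<alpha> * k22 \<noteq> 0"
proof (rule ccontr)
  assume "\<not> ?thesis"
  then have h: "\<beta> * k11 - \<alpha> * k21 = 0" "\<beta> * k12 - \<alpha> * k22 = 0" by auto
  have n: "\<alpha>\<^sup>2 + \<beta>\<^sup>2 \<noteq> 0" using assms(3) by (simp add: sum_power2_eq_zero_iff)
  have "(\<alpha>\<^sup>2 + \<beta>\<^sup>2) * k11 = \<alpha> * (\<alpha> * k11 + \<beta> * k21) + \<beta> * (\<beta> * k11 - \<alpha> * k21)" by algebra
  then have "(\<alpha>\<^sup>2 + \<beta>\<^sup>2) * k11 = 0" using assms h by simp
  then have "k11 = 0" by (metis n mult_eq_0_iff)
  have "(\<alpha>\<^sup>2 + \<beta>\<^sup>2) * k21 = \<beta> * (\<alpha> * k11 + \<beta> * k21) - \<alpha> * (\<beta> * k11 - \<alpha> * k21)" by algebra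
  then have "(\<alpha>\<^sup>2 + \<beta>\<^sup>2) * k21 = 0" using assms h by simp
  then have "k21 = 0" by (metis n mult_eq_0_iff)
  have "(\<alpha>\<^sup>2 + \<beta>\<^sup>2) * k12 = \<alpha> * (\<alpha> * k12 + \<beta> * k22) + \<beta> * (\<beta> * k12 - \<alpha> * k22)" by algebra
  then have "(\<alpha>\<^sup>2 + \<beta>\<^sup>2) * k12 = 0" using assms h by simp
  then have "k12 = 0" by (metis n mult_eq_0_iff)
  then show False using \<open>k21 = 0\<close> assms(4) by simp
qed

definition Qf :: "real \<Rightarrow> real \<Rightarrow> real \<Rightarrow> real \<Rightarrow> real \<Rightarrow> real \<Rightarrow> real \<Rightarrow> real" where
  "Qf k11 k12 k21 k22 \<alpha> \<beta> t = k11 * (- \<alpha> * t + \<beta>)\<^sup>2 + k22 * (\<beta> * t + \<alpha>)\<^sup>2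
     - (\<beta> * t + \<alpha>) * (- \<alpha> * t + \<beta>) * (k21 + k12)"

lemma alg_Q:
  fixes k11 k12 k21 k22 \<alpha> \<beta> :: real
  assumes "\<alpha> \<noteq> 0 \<or> \<beta> \<noteq> 0" "k11 * k22 - k12 * k21 = 0" "k12 - k21 \<noteq> 0"
  shows "\<exists>t\<in>{1,2,3}. Qf k11 k12 k21 k22 \<alpha> \<beta> t \<noteq> 0"
proof (rule ccontr)
  assume "\<not> ?thesis"
  then have z: "Qf k11 k12 k21 k22 \<alpha> \<beta> 1 = 0" "Qf k11 k12 k21 k22 \<alpha> \<beta> 2 = 0" "Qf k11 k12 k21 k22 \<alpha> \<beta> 3 = 0" by auto
  define A where "A = k11" define B where "B = k22" define C where "C = k21 + k12"
  define P where "P = B * \<beta>\<^sup>2 + A * \<alpha>\<^sup>2 + C * \<alpha> * \<beta>"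
  define R where "R = 2 * \<alpha> * \<beta> * B - 2 * \<alpha> * \<beta> * A - C * (\<beta>\<^sup>2 - \<alpha>\<^sup>2)"
  define S where "S = B * \<alpha>\<^sup>2 + A * \<beta>\<^sup>2 - C * \<alpha> * \<beta>"
  have q: "Qf k11 k12 k21 k22 \<alpha> \<beta> t = P * t\<^sup>2 + R * t + S" for t
    unfolding Qf_def P_def R_def S_def A_def B_def C_def by algebra
  have "P + R + S = 0" "4 * P + 2 * R + S = 0" "9 * P + 3 * R + S = 0" using z q[of 1] q[of 2] q[of 3] by simp_all
  then have P: "P = 0" and R: "R = 0" and S: "S = 0" by linarith+
  have n: "\<alpha>\<^sup>2 + \<beta>\<^sup>2 \<noteq> 0" using assms(1) by (simp add: sum_power2_eq_zero_iff)
  have "(A + B) * (\<alpha>\<^sup>2 + \<beta>\<^sup>2) = P + S" unfolding P_def S_def by algebra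
  then have "(A + B) * (\<alpha>\<^sup>2 + \<beta>\<^sup>2) = 0" using P S by simp
  then have AB: "B = - A" by (metis n mult_eq_0_iff add_eq_0_iff)
  define u where "u = \<alpha>\<^sup>2 - \<beta>\<^sup>2" define v where "v = 2 * \<alpha> * \<beta>"
  have uv: "u\<^sup>2 + v\<^sup>2 = (\<alpha>\<^sup>2 + \<beta>\<^sup>2)\<^sup>2" unfolding u_def v_def by algebra
  then have uv0: "u\<^sup>2 + v\<^sup>2 \<noteq> 0" using n by simp
  have e1: "A * u + C * v / 2 = 0" using P AB unfolding P_def u_def v_def by (simp add: algebra_simps power2_eq_square)
  have e2: "2 * v * A - C * u = 0" using R AB unfolding R_def u_def v_def by (simp add: algebra_simps power2_eq_square)
  have "A * (u\<^sup>2 + v\<^sup>2) = u * (A * u + C * v / 2) + (v/2) * (2 * v * A - C * u)" by (simp add: field_simps power2_eq_square)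
  then have "A * (u\<^sup>2 + v\<^sup>2) = 0" using e1 e2 by simp
  then have A0: "A = 0" by (metis uv0 mult_eq_0_iff)
  have "C * (u\<^sup>2 + v\<^sup>2) = 2 * v * (A * u + C * v / 2) - u * (2 * v * A - C * u)" by (simp add: field_simps power2_eq_square)
  then have "C * (u\<^sup>2 + v\<^sup>2) = 0" using e1 e2 by simp
  then have C0: "C = 0" by (metis uv0 mult_eq_0_iff)
  have "k11 = 0" "k22 = 0" "k12 = - k21" using A0 AB C0 unfolding A_def B_def C_def by auto
  then have "k21 * k21 = 0" using assms(2) by simp
  then show False using \<open>k12 = - k21\<close> assms(3) by simp
qed

context SR begin

definition "K11 x = Da x (X1 x)"
definition "K12 x = Da x (X2 x)"
definition "K21 x = Db x (X1 x)"
definition "K22 x = Db x (X2 x)"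

lemma contX1: "continuous_on U X1" and contX2: "continuous_on U X2" and contX3: "continuous_on U X3"
  and contw: "continuous_on U w"
  using C1_cont[OF CX1 U_open] C1_cont[OF CX2 U_open] C1_cont[OF CX3 U_open] C1_cont[OF Cw U_open] .

lemma K_cont: "continuous_on U K11" "continuous_on U K12" "continuous_on U K21" "continuous_on U K22"
  unfolding K11_def[abs_def] K12_def[abs_def] K21_def[abs_def] K22_def[abs_def]
  by (intro cont_apply[OF Ca] cont_apply[OF Cb] contX1 contX2)+

lemma vfK: assumes "x \<in> U"
  shows "vf_apply X1 a x = K11 x" "vf_apply X2 a x = K12 x" "vf_apply X1 b x = K21 x" "vf_apply X2 b x = K22 x"
  using vf2[OF Ca assms] vf2[OF Cb assms] by (auto simp: K11_def K12_def K21_def K22_def)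

lemma a_cont: "continuous_on U a" and b_cont: "continuous_on U b"
  using C1_cont[OF Ca U_open] C1_cont[OF Cb U_open] .

lemma gram_pos:
  assumes x: "x \<in> U"
  shows "(X1 x \<bullet> X1 x) * (X2 x \<bullet> X2 x) - (X1 x \<bullet> X2 x)\<^sup>2 > 0"
proof -
  define u where "u = X1 x" define v where "v = X2 x"
  have u0: "u \<noteq> 0"
  proof
    assume "u = 0"
    then have "1 *\<^sub>R X1 x + 0 *\<^sub>R X2 x = 0" by (simp add: u_def)
    then show False using frame[OF x, of 1 0] by simp
  qed
  define z where "z = (u \<bullet> u) *\<^sub>R v - (u \<bullet> v) *\<^sub>R u"
  have z0: "z \<noteq> 0"
  proof
    assume "z = 0"
    then have "(- (u \<bullet> v)) *\<^sub>R X1 x + (u \<bullet> u) *\<^sub>R X2 x = 0" by (simp add: z_def u_def v_def algebra_simps)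
    then have "u \<bullet> u = 0" using frame[OF x] by blast
    then show False using u0 by simp
  qed
  have "z \<bullet> z = (u \<bullet> u) * ((u \<bullet> u) * (v \<bullet> v) - (u \<bullet> v)\<^sup>2)"
    unfolding z_def by (simp add: inner_diff_left inner_diff_right inner_commute algebra_simps power2_eq_square)
  moreover have "z \<bullet> z > 0" using z0 by simp
  moreover have "u \<bullet> u > 0" using u0 by simp
  ultimately show ?thesis unfolding u_def v_def by (simp add: zero_less_mult_iff)
qed

lemma c_formula:
  assumes x: "x \<in> U"
  defines "Y \<equiv> - lie_bracket X1 X2 x - X3 x"
  defines "G \<equiv> (X1 x \<bullet> X1 x) * (X2 x \<bullet> X2 x) - (X1 x \<bullet> X2 x)\<^sup>2"
  shows "c1 x = ((X2 x \<bullet> X2 x) * (X1 x \<bullet> Y) - (X1 x \<bullet> X2 x) * (X2 x \<bullet> Y)) / G"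
    "c2 x = ((X1 x \<bullet> X1 x) * (X2 x \<bullet> Y) - (X1 x \<bullet> X2 x) * (X1 x \<bullet> Y)) / G"
proof -
  have Yeq: "Y = c1 x *\<^sub>R X1 x + c2 x *\<^sub>R X2 x"
    using neg_lie[OF x] c3_one[OF x] unfolding Y_def by (simp add: algebra_simps)
  have G: "G > 0" using gram_pos[OF x] unfolding G_def .
  have i1: "X1 x \<bullet> Y = c1 x * (X1 x \<bullet> X1 x) + c2 x * (X1 x \<bullet> X2 x)"
    unfolding Yeq by (simp add: inner_add_right)
  have i2: "X2 x \<bullet> Y = c1 x * (X1 x \<bullet> X2 x) + c2 x * (X2 x \<bullet> X2 x)"
    unfolding Yeq by (simp add: inner_add_right inner_commute)
  have "c1 x * G = (X2 x \<bullet> X2 x) * (X1 x \<bullet> Y) - (X1 x \<bullet> X2 x) * (X2 x \<bullet> Y)"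
    unfolding i1 i2 G_def power2_eq_square by algebra
  then show "c1 x = ((X2 x \<bullet> X2 x) * (X1 x \<bullet> Y) - (X1 x \<bullet> X2 x) * (X2 x \<bullet> Y)) / G"
    using G by (simp add: field_simps)
  have "c2 x * G = (X1 x \<bullet> X1 x) * (X2 x \<bullet> Y) - (X1 x \<bullet> X2 x) * (X1 x \<bullet> Y)"
    unfolding i1 i2 G_def power2_eq_square by algebra
  then show "c2 x = ((X1 x \<bullet> X1 x) * (X2 x \<bullet> Y) - (X1 x \<bullet> X2 x) * (X1 x \<bullet> Y)) / G"
    using G by (simp add: field_simps)
qed

lemma c_cont: "continuous_on U c1" "continuous_on U c2"
proof -
  have lc: "continuous_on U (lie_bracket X1 X2)"
    unfolding lie_bracket_def[abs_def]
    by (intro continuous_intros cont_apply[OF CX1] cont_apply[OF CX2] contX1 contX2)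
  have Gnz: "\<forall>x\<in>U. (X1 x \<bullet> X1 x) * (X2 x \<bullet> X2 x) - (X1 x \<bullet> X2 x)\<^sup>2 \<noteq> 0"
    using gram_pos by (metis less_irrefl)
  have "continuous_on U (\<lambda>x. ((X2 x \<bullet> X2 x) * (X1 x \<bullet> (- lie_bracket X1 X2 x - X3 x)) - (X1 x \<bullet> X2 x) * (X2 x \<bullet> (- lie_bracket X1 X2 x - X3 x)))
      / ((X1 x \<bullet> X1 x) * (X2 x \<bullet> X2 x) - (X1 x \<bullet> X2 x)\<^sup>2))"
    using Gnz by (intro continuous_intros lc contX1 contX2 contX3) auto
  then show "continuous_on U c1"
    by (rule continuous_on_eq) (simp add: c_formula)
  have "continuous_on U (\<lambda>x. ((X1 x \<bullet> X1 x) * (X2 x \<bullet> (- lie_bracket X1 X2 x - X3 x)) - (X1 x \<bullet> X2 x) * (X1 x \<bullet> (- lie_bracket X1 X2 x - X3 x)))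
      / ((X1 x \<bullet> X1 x) * (X2 x \<bullet> X2 x) - (X1 x \<bullet> X2 x)\<^sup>2))"
    using Gnz by (intro continuous_intros lc contX1 contX2 contX3) auto
  then show "continuous_on U c2"
    by (rule continuous_on_eq) (simp add: c_formula)
qed

lemma ev_cont:
  fixes f :: "real^3 \<Rightarrow> real"
  assumes "continuous_on U f" "x \<in> U" "e > 0"
  shows "\<forall>\<^sub>F y in nhds x. \<bar>f y - f x\<bar> < e"
proof -
  have "isCont f x" using assms U_open continuous_on_eq_continuous_at by blast
  then have "(f \<longlongrightarrow> f x) (nhds x)" using tendsto_at_iff_tendsto_nhds isCont_def by blast
  from tendstoD[OF this assms(3)] show ?thesis by (simp add: dist_real_def)
qed

lemma ev_contv:
  fixes f :: "real^3 \<Rightarrow> 'b::real_normed_vector"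
  assumes "continuous_on U f" "x \<in> U" "e > 0"
  shows "\<forall>\<^sub>F y in nhds x. norm (f y - f x) < e"
proof -
  have "isCont f x" using assms U_open continuous_on_eq_continuous_at by blast
  then have "(f \<longlongrightarrow> f x) (nhds x)" using tendsto_at_iff_tendsto_nhds isCont_def by blast
  from tendstoD[OF this assms(3)] show ?thesis by (simp add: dist_norm)
qed

lemma c_bounded:
  assumes "x \<in> U"
  shows "\<exists>B. \<forall>\<^sub>F y in nhds x. \<bar>c1 y\<bar> \<le> B \<and> \<bar>c2 y\<bar> \<le> B"
proof -
  have "\<forall>\<^sub>F y in nhds x. \<bar>c1 y - c1 x\<bar> < 1 \<and> \<bar>c2 y - c2 x\<bar> < 1"
    using eventually_conj[OF ev_cont[OF c_cont(1) assms zero_less_one] ev_cont[OF c_cont(2) assms zero_less_one]] .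
  then have "\<forall>\<^sub>F y in nhds x. \<bar>c1 y\<bar> \<le> \<bar>c1 x\<bar> + \<bar>c2 x\<bar> + 1 \<and> \<bar>c2 y\<bar> \<le> \<bar>c1 x\<bar> + \<bar>c2 x\<bar> + 1"
    by (rule eventually_mono) auto
  then show ?thesis by blast
qed

lemma rank2:
  assumes q: "q \<in> char_points U X1 X2 F" and det: "K11 q * K22 q - K12 q * K21 q \<noteq> 0"
  shows "\<not> q islimpt char_points U X1 X2 F"
proof -
  have qU: "q \<in> U" and q0: "F q = 0" "a q = 0" "b q = 0" using q by (auto simp: char_points_def)
  have inj: "h = 0" if h: "DF q h = 0" "Da q h = 0" "Db q h = 0" for h
  proof -
    obtain t1 t2 t3 where ht: "h = t1 *\<^sub>R X1 q + t2 *\<^sub>R X2 q + t3 *\<^sub>R X3 q" using span3[OF qU] by blast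
    have lF: "linear (DF q)" and la: "linear (Da q)" and lb: "linear (Db q)"
      using C1_linear[OF CF qU] C1_linear[OF Ca qU] C1_linear[OF Cb qU] .
    have "DF q h = t1 * a q + t2 * b q + t3 * DF q (X3 q)"
      unfolding ht using lF by (simp add: linear_add linear_scale vf_apply_def)
    then have t3: "t3 = 0" using h(1) q0 DF_X3[OF qU q0] by simp
    have "Da q h = t1 * K11 q + t2 * K12 q"
      unfolding ht t3 using la by (simp add: linear_add linear_scale K11_def K12_def)
    moreover have "Db q h = t1 * K21 q + t2 * K22 q"
      unfolding ht t3 using lb by (simp add: linear_add linear_scale K21_def K22_def)
    ultimately have "t1 = 0 \<and> t2 = 0" using h solve2[of "K11 q" t1 "K12 q" t2 "K21 q" "K22 q"] det
      by (simp add: mult.commute)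
    then show ?thesis using ht t3 by simp
  qed
  obtain U' V g g' c where I: "open U'" "q \<in> U'" "U' \<subseteq> U \<inter> ball q 1" "open V" "tri F a b q \<in> V"
    "homeomorphism U' V (tri F a b) g"
    "\<And>y. y \<in> V \<Longrightarrow> (g has_derivative g' y) (at y)"
    "\<And>y k. y \<in> V \<Longrightarrow> trid DF Da Db (g y) (g' y k) = k"
    "c > 0" "\<And>x k. x \<in> U' \<Longrightarrow> c * norm k \<le> norm (trid DF Da Db x k)"
    by (rule ift3[OF U_open qU CF Ca Cb _ zero_less_one]) ((rule inj; assumption), blast)
  show ?thesis
  proof
    assume "q islimpt char_points U X1 X2 F"
    then obtain y where y: "y \<in> char_points U X1 X2 F" "y \<in> U'" "y \<noteq> q"
      using I(1,2) unfolding islimpt_def by blast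
    have "tri F a b y = tri F a b q" using y(1) q0 by (simp add: char_points_def vec3_eq)
    then have "g (tri F a b y) = g (tri F a b q)" by simp
    moreover have "\<forall>x\<in>U'. g (tri F a b x) = x" using I(6) unfolding homeomorphism_def by blast
    ultimately show False using y(2,3) I(2) by auto
  qed
qed

end

lemma minimal_core:
  fixes A Bb s x y k11 k12 k21 k22 c1 c2 Bc :: real
  assumes AB: "A = s * x" "Bb = s * y" and s: "s \<noteq> 0" and xy: "x\<^sup>2 + y\<^sup>2 > 0"
    and eq: "(k11 * Bb\<^sup>2 + k22 * A\<^sup>2 - A * Bb * (k21 + k12)) / (sqrt (A\<^sup>2 + Bb\<^sup>2)) ^ 3
             + (c2 * A - c1 * Bb) / sqrt (A\<^sup>2 + Bb\<^sup>2) = 0"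
    and c: "\<bar>c1\<bar> \<le> Bc" "\<bar>c2\<bar> \<le> Bc"
  shows "\<bar>k11 * y\<^sup>2 + k22 * x\<^sup>2 - x * y * (k21 + k12)\<bar> \<le> (x\<^sup>2 + y\<^sup>2) * Bc * \<bar>s\<bar> * (\<bar>x\<bar> + \<bar>y\<bar>)"
proof -
  define D where "D = sqrt (A\<^sup>2 + Bb\<^sup>2)"
  have "D\<^sup>2 = A\<^sup>2 + Bb\<^sup>2" unfolding D_def by simp
  also have "\<dots> = s\<^sup>2 * (x\<^sup>2 + y\<^sup>2)" unfolding AB power2_eq_square by algebra
  finally have D2: "D\<^sup>2 = s\<^sup>2 * (x\<^sup>2 + y\<^sup>2)" .
  have s2: "s\<^sup>2 > 0" using s by simp
  have "D\<^sup>2 > 0" unfolding D2 using s2 xy by simp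
  moreover have "D \<ge> 0" unfolding D_def by simp
  ultimately have Dp: "D > 0" by (metis less_eq_real_def power_zero_numeral zero_less_numeral less_irrefl)
  define N where "N = k11 * Bb\<^sup>2 + k22 * A\<^sup>2 - A * Bb * (k21 + k12)"
  define Q where "Q = k11 * y\<^sup>2 + k22 * x\<^sup>2 - x * y * (k21 + k12)"
  have NQ: "N = s\<^sup>2 * Q" unfolding N_def Q_def AB power2_eq_square by algebra
  have "N / D ^ 3 + (c2 * A - c1 * Bb) / D = 0" using eq unfolding N_def D_def .
  then have e0: "(N / D ^ 3 + (c2 * A - c1 * Bb) / D) * D ^ 3 = 0" by simp
  have e1: "N / D ^ 3 * D ^ 3 = N" using Dp by simp
  have e2: "(c2 * A - c1 * Bb) / D * D ^ 3 = D\<^sup>2 * (c2 * A - c1 * Bb)"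
    using Dp by (simp add: power2_eq_square power3_eq_cube)
  have "N + D\<^sup>2 * (c2 * A - c1 * Bb) = 0" using e0 unfolding distrib_right e1 e2 .
  then have "s\<^sup>2 * Q + s\<^sup>2 * (x\<^sup>2 + y\<^sup>2) * (c2 * (s * x) - c1 * (s * y)) = 0" unfolding NQ D2 AB .
  then have "s\<^sup>2 * Q = s\<^sup>2 * (- (x\<^sup>2 + y\<^sup>2) * (s * (c2 * x - c1 * y)))" by algebra
  then have "Q = - (x\<^sup>2 + y\<^sup>2) * (s * (c2 * x - c1 * y))" using s2 by (metis mult_left_cancel less_irrefl)
  then have "\<bar>Q\<bar> = (x\<^sup>2 + y\<^sup>2) * \<bar>s\<bar> * \<bar>c2 * x - c1 * y\<bar>" using xy by (simp add: abs_mult)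
  also have "\<dots> \<le> (x\<^sup>2 + y\<^sup>2) * \<bar>s\<bar> * (Bc * (\<bar>x\<bar> + \<bar>y\<bar>))"
  proof (intro mult_left_mono)
    have "\<bar>c2 * x\<bar> \<le> Bc * \<bar>x\<bar>" using c by (simp add: abs_mult mult_right_mono)
    moreover have "\<bar>c1 * y\<bar> \<le> Bc * \<bar>y\<bar>" using c by (simp add: abs_mult mult_right_mono)
    moreover have "\<bar>c2 * x - c1 * y\<bar> \<le> \<bar>c2 * x\<bar> + \<bar>c1 * y\<bar>" by (rule abs_triangle_ineq4)
    ultimately show "\<bar>c2 * x - c1 * y\<bar> \<le> Bc * (\<bar>x\<bar> + \<bar>y\<bar>)" by (simp add: distrib_left)
  qed (use xy in auto)
  finally show ?thesis unfolding Q_def by (simp add: mult.assoc mult.left_commute)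
qed

lemma sol_cont:
  fixes L :: "real \<Rightarrow> real^3 \<Rightarrow> real^3" and k :: "real \<Rightarrow> real^3"
  assumes sol: "\<And>t. t \<in> S \<Longrightarrow> L t (k t) = k0"
    and low: "\<And>t h. t \<in> S \<Longrightarrow> c * norm h \<le> norm (L t h)" and c: "c > 0"
    and t0: "t0 \<in> S" and lin: "linear (L t0)"
    and near: "\<And>e. e > 0 \<Longrightarrow> \<forall>\<^sub>F t in at t0 within S. \<forall>h. norm (L t h - L t0 h) \<le> e * norm h"
  shows "continuous (at t0 within S) k"
  unfolding continuous_within
proof (rule tendstoI)
  fix e :: real assume e: "e > 0"
  define E where "E = e * c * c / (norm k0 + 1)"
  have "norm k0 + 1 > 0" by (smt (verit) norm_ge_zero)
  then have E: "E > 0" using e c unfolding E_def by (intro divide_pos_pos mult_pos_pos) auto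
  have kb: "norm (k t) \<le> norm k0 / c" if "t \<in> S" for t
    using low[OF that, of "k t"] sol[OF that] c by (simp add: field_simps)
  have "\<forall>\<^sub>F t in at t0 within S. t \<in> S" by (simp add: eventually_at_filter)
  with near[OF E] have "\<forall>\<^sub>F t in at t0 within S. t \<in> S \<and> (\<forall>h. norm (L t h - L t0 h) \<le> E * norm h)"
    by (simp add: eventually_conj_iff)
  then show "\<forall>\<^sub>F t in at t0 within S. dist (k t) (k t0) < e"
  proof (rule eventually_mono, safe)
    fix t assume t: "t \<in> S" and n: "\<forall>h. norm (L t h - L t0 h) \<le> E * norm h"
    have "L t0 (k t - k t0) = L t0 (k t) - L t (k t)"
      using sol[OF t] sol[OF t0] lin by (simp add: linear_diff)
    then have "c * norm (k t - k t0) \<le> norm (L t (k t) - L t0 (k t))"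
      using low[OF t0, of "k t - k t0"] by (simp add: norm_minus_commute)
    also have "\<dots> \<le> E * norm (k t)" using n by blast
    also have "\<dots> \<le> E * (norm k0 / c)" using kb[OF t] E by (intro mult_left_mono) auto
    also have "\<dots> = e * c * (norm k0 / (norm k0 + 1))" unfolding E_def using c by (simp add: field_simps)
    also have "\<dots> < e * c"
    proof -
      have "norm k0 / (norm k0 + 1) < 1" using \<open>norm k0 + 1 > 0\<close> by (simp add: divide_less_eq)
      moreover have "e * c > 0" using e c by simp
      ultimately show ?thesis by (metis mult.right_neutral mult_strict_left_mono)
    qed
    finally have "norm (k t - k t0) < e" using c by (simp add: mult.commute)
    then show "dist (k t) (k t0) < e" by (simp add: dist_norm)
  qed
qed

context SR begin

lemma rank1:
  assumes q: "q \<in> char_points U X1 X2 F" and det: "K11 q * K22 q - K12 q * K21 q = 0"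
  shows "\<exists>V e \<gamma>. open V \<and> q \<in> V \<and> e > 0 \<and> \<gamma> 0 = q
              \<and> \<gamma> C1_differentiable_on {-e<..<e}
              \<and> (\<forall>t\<in>{-e<..<e}. vector_derivative \<gamma> (at t) \<noteq> 0
                                 \<and> \<gamma> t \<in> char_points U X1 X2 F)
              \<and> char_points U X1 X2 F \<inter> V \<subseteq> \<gamma> ` {-e<..<e}"
proof -
  have qU: "q \<in> U" and q0: "F q = 0" "a q = 0" "b q = 0" using q by (auto simp: char_points_def)
  have kap: "K12 q - K21 q \<noteq> 0" using kappa[OF qU q0] DF_X3[OF qU q0] by (simp add: K12_def K21_def)
  obtain \<alpha> \<beta> where ab: "\<alpha> \<noteq> 0 \<or> \<beta> \<noteq> 0" "\<alpha> * K11 q + \<beta> * K21 q = 0" "\<alpha> * K12 q + \<beta> * K22 q = 0"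
    using alg_det0[OF det kap] by blast
  define N2 where "N2 = \<alpha>\<^sup>2 + \<beta>\<^sup>2"
  have N2: "N2 > 0" using ab(1) unfolding N2_def by (simp add: sum_power2_gt_zero_iff)
  define ll where "ll x = \<beta> * a x + (- \<alpha>) * b x" for x
  define m where "m x = \<alpha> * a x + \<beta> * b x" for x
  define Dl where "Dl x h = \<beta> * Da x h + (- \<alpha>) * Db x h" for x h
  define Dm where "Dm x h = \<alpha> * Da x h + \<beta> * Db x h" for x h
  have Cl: "C1 U ll Dl" unfolding ll_def[abs_def] Dl_def[abs_def] by (rule C1_lincomb[OF Ca Cb])
  have Cm: "C1 U m Dm" unfolding m_def[abs_def] Dm_def[abs_def] by (rule C1_lincomb[OF Ca Cb])
  have aN: "N2 * a x = \<beta> * ll x + \<alpha> * m x" for x unfolding N2_def ll_def m_def power2_eq_square by algebra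
  have bN: "N2 * b x = - \<alpha> * ll x + \<beta> * m x" for x unfolding N2_def ll_def m_def power2_eq_square by algebra
  define lam1 where "lam1 = Dl q (X1 q)"
  define lam2 where "lam2 = Dl q (X2 q)"
  have lam0: "lam1 \<noteq> 0 \<or> lam2 \<noteq> 0"
    using alg_lam[OF ab(2) ab(3) ab(1) kap] unfolding lam1_def lam2_def Dl_def K11_def K12_def K21_def K22_def
    by (simp add: algebra_simps)
  have Dm0: "Dm q (X1 q) = 0" "Dm q (X2 q) = 0"
    using ab(2,3) unfolding Dm_def K11_def K12_def K21_def K22_def by simp_all
  define nv where "nv = lam2 *\<^sub>R X1 q - lam1 *\<^sub>R X2 q"
  have nv0: "nv \<noteq> 0"
  proof
    assume "nv = 0"
    then have "lam2 *\<^sub>R X1 q + (- lam1) *\<^sub>R X2 q = 0" unfolding nv_def by simp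
    then have "lam2 = 0 \<and> - lam1 = 0" using frame[OF qU] by blast
    then show False using lam0 by simp
  qed
  define \<sigma> where "\<sigma> x = nv \<bullet> x" for x
  define Ds where "Ds x h = nv \<bullet> h" for x h :: "real^3"
  have Cs: "C1 U \<sigma> Ds" unfolding C1_def \<sigma>_def[abs_def] Ds_def[abs_def]
    by (auto intro!: derivative_eq_intros continuous_intros)
  have lF: "linear (DF q)" and lDl: "linear (Dl q)" and lm: "linear (Dm q)"
    using C1_linear[OF CF qU] C1_linear[OF Cl qU] C1_linear[OF Cm qU] .
  have inj: "h = 0" if h: "DF q h = 0" "Dl q h = 0" "Ds q h = 0" for h
  proof -
    obtain t1 t2 t3 where ht: "h = t1 *\<^sub>R X1 q + t2 *\<^sub>R X2 q + t3 *\<^sub>R X3 q" using span3[OF qU] by blast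
    have "DF q h = t1 * a q + t2 * b q + t3 * DF q (X3 q)"
      unfolding ht using lF by (simp add: linear_add linear_scale vf_apply_def)
    then have t3: "t3 = 0" using h(1) q0 DF_X3[OF qU q0] by simp
    have e1: "lam1 * t1 + lam2 * t2 = 0"
      using h(2) unfolding ht t3 lam1_def lam2_def using lDl by (simp add: linear_add linear_scale mult.commute)
    have e2: "(nv \<bullet> X1 q) * t1 + (nv \<bullet> X2 q) * t2 = 0"
      using h(3) unfolding ht t3 Ds_def by (simp add: inner_add_right mult.commute)
    have "lam1 * (nv \<bullet> X2 q) - lam2 * (nv \<bullet> X1 q) = nv \<bullet> (lam1 *\<^sub>R X2 q - lam2 *\<^sub>R X1 q)"
      by (simp add: inner_diff_right)
    also have "\<dots> = - (nv \<bullet> nv)" unfolding nv_def by (simp add: inner_minus_right[symmetric])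
    finally have "lam1 * (nv \<bullet> X2 q) - lam2 * (nv \<bullet> X1 q) \<noteq> 0" using nv0 by simp
    then have "t1 = 0 \<and> t2 = 0" using solve2[OF e1 e2] by simp
    then show ?thesis using ht t3 by simp
  qed
  define c0 where "c0 = Dm q (X3 q) / DF q (X3 q)"
  have c0: "Dm q h = c0 * DF q h" for h
  proof -
    obtain t1 t2 t3 where ht: "h = t1 *\<^sub>R X1 q + t2 *\<^sub>R X2 q + t3 *\<^sub>R X3 q" using span3[OF qU] by blast
    have "DF q h = t3 * DF q (X3 q)"
      unfolding ht using lF q0 by (simp add: linear_add linear_scale vf_apply_def)
    moreover have "Dm q h = t3 * Dm q (X3 q)"
      unfolding ht using lm Dm0 by (simp add: linear_add linear_scale)
    ultimately show ?thesis using DF_X3[OF qU q0] unfolding c0_def by simp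
  qed
  obtain t where t: "t \<in> {1,2,3}" "Qf (K11 q) (K12 q) (K21 q) (K22 q) \<alpha> \<beta> t \<noteq> 0"
    using alg_Q[OF ab(1) det kap] by blast
  have tpos: "t > 0" using t(1) by auto
  define xt where "xt = \<beta> * t + \<alpha>"
  define yt where "yt = - \<alpha> * t + \<beta>"
  define R2 where "R2 = xt\<^sup>2 + yt\<^sup>2"
  have R2: "R2 = N2 * (t\<^sup>2 + 1)" unfolding R2_def xt_def yt_def N2_def power2_eq_square by algebra
  have "t\<^sup>2 + 1 > 0" by (smt (verit) zero_le_power2)
  then have R2pos: "R2 > 0" unfolding R2 using N2 by simp
  define Qp where "Qp x = Qf (K11 x) (K12 x) (K21 x) (K22 x) \<alpha> \<beta> t" for x
  have Qp_cont: "continuous_on U Qp"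
    unfolding Qp_def[abs_def] Qf_def by (intro continuous_intros K_cont)
  define Q0 where "Q0 = Qp q"
  have Q0: "Q0 \<noteq> 0" using t(2) unfolding Q0_def Qp_def .
  have Qp_eq: "Qp x = K11 x * yt\<^sup>2 + K22 x * xt\<^sup>2 - xt * yt * (K21 x + K12 x)" for x
    unfolding Qp_def Qf_def xt_def yt_def by simp
  obtain B where B: "\<forall>\<^sub>F y in nhds q. \<bar>c1 y\<bar> \<le> B \<and> \<bar>c2 y\<bar> \<le> B" using c_bounded[OF qU] by blast
  have B0: "B \<ge> 0" using eventually_nhds_x_imp_x[OF B] by linarith
  define P where "P = tri F ll \<sigma>"
  define DP where "DP = trid DF Dl Ds"
  obtain U' V g g' c where I: "open U'" "q \<in> U'" "U' \<subseteq> U \<inter> ball q 1" "open V" "P q \<in> V"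
    "homeomorphism U' V P g"
    "\<And>y. y \<in> V \<Longrightarrow> (g has_derivative g' y) (at y)"
    "\<And>y k. y \<in> V \<Longrightarrow> DP (g y) (g' y k) = k"
    "c > 0" "\<And>x k. x \<in> U' \<Longrightarrow> c * norm k \<le> norm (DP x k)"
    unfolding P_def DP_def
    by (rule ift3[OF U_open qU CF Cl Cs _ zero_less_one]) ((rule inj; assumption), blast)
  have hom1: "\<And>x. x \<in> U' \<Longrightarrow> g (P x) = x" and hom2: "\<And>y. y \<in> V \<Longrightarrow> P (g y) = y"
    and hom3: "\<And>y. y \<in> V \<Longrightarrow> g y \<in> U'" and hom4: "continuous_on V g"
    and hom5: "\<And>x. x \<in> U' \<Longrightarrow> P x \<in> V"
    using I(6) unfolding homeomorphism_def by auto
  have U'U: "U' \<subseteq> U" using I(3) by auto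
  have CP: "C1 U P DP" unfolding P_def DP_def by (rule C1_tri[OF CF Cl Cs])
  have ll_q: "ll q = 0" and m_q: "m q = 0" using q0 by (simp_all add: ll_def m_def)
  have gq: "g (P q) = q" using hom1 I(2) by blast
  have claim: "\<exists>\<rho>>0. ball q \<rho> \<subseteq> U' \<and> (\<forall>p\<in>ball q \<rho>. F p = 0 \<longrightarrow> ll p = 0 \<longrightarrow> m p = 0)"
  proof -
    define eps1 where "eps1 = c / (8 * t)"
    define eps2 where "eps2 = c / (8 * t * (\<bar>c0\<bar> + 1))"
    have c01: "\<bar>c0\<bar> + 1 > 0" by (smt (verit) abs_ge_zero)
    have eps1: "eps1 > 0" unfolding eps1_def using I(9) tpos by simp
    have eps2: "eps2 > 0" unfolding eps2_def using I(9) tpos c01 by simp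
    define W where "W = \<bar>xt\<bar> + \<bar>yt\<bar>"
    have W0: "W \<ge> 0" unfolding W_def by simp
    define \<eta> where "\<eta> = \<bar>Q0\<bar> * N2 / (4 * R2 * (B + 1) * (W + 1))"
    have eta: "\<eta> > 0" unfolding \<eta>_def using Q0 N2 R2pos B0 W0 by (simp add: add_pos_nonneg)
    define Good where "Good x \<longleftrightarrow> x \<in> U' \<and> \<bar>Qp x - Q0\<bar> < \<bar>Q0\<bar> / 2 \<and> \<bar>c1 x\<bar> \<le> B \<and> \<bar>c2 x\<bar> \<le> B
       \<and> (\<forall>h. norm (Dm x h - Dm q h) \<le> eps1 * norm h) \<and> (\<forall>h. norm (DF x h - DF q h) \<le> eps2 * norm h)" for x
    have evG: "\<forall>\<^sub>F x in nhds q. Good x"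
    proof -
      have 1: "\<forall>\<^sub>F x in nhds q. x \<in> U'" using I(1,2) eventually_nhds by blast
      have 2: "\<forall>\<^sub>F x in nhds q. \<bar>Qp x - Q0\<bar> < \<bar>Q0\<bar> / 2"
        using ev_cont[OF Qp_cont qU, of "\<bar>Q0\<bar> / 2"] Q0 unfolding Q0_def by simp
      have 4: "\<forall>\<^sub>F x in nhds q. x \<in> U \<and> (\<forall>h. norm (Dm x h - Dm q h) \<le> eps1 * norm h)"
        by (rule opcont[OF Cm U_open qU eps1])
      have 5: "\<forall>\<^sub>F x in nhds q. x \<in> U \<and> (\<forall>h. norm (DF x h - DF q h) \<le> eps2 * norm h)"
        by (rule opcont[OF CF U_open qU eps2])
      show ?thesis using eventually_conj[OF 1 eventually_conj[OF 2 eventually_conj[OF B eventually_conj[OF 4 5]]]]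
        by (rule eventually_mono) (simp add: Good_def)
    qed
    obtain rV where rV: "rV > 0" "ball (P q) rV \<subseteq> V" using I(4,5) open_contains_ball by blast
    obtain \<rho>1 where rho1: "\<rho>1 > 0" "\<And>x. dist x q < \<rho>1 \<Longrightarrow> Good x"
      using evG unfolding eventually_nhds_metric by blast
    obtain rg where rg: "rg > 0" "\<And>z. z \<in> V \<Longrightarrow> dist z (P q) < rg \<Longrightarrow> dist (g z) q < \<rho>1"
    proof -
      have "\<forall>x\<in>V. \<forall>\<epsilon>>0. \<exists>\<delta>>0. \<forall>x'\<in>V. dist x' x < \<delta> \<longrightarrow> dist (g x') (g x) < \<epsilon>"
        using hom4 unfolding continuous_on_iff .
      then obtain d where "d > 0" "\<forall>x'\<in>V. dist x' (P q) < d \<longrightarrow> dist (g x') (g (P q)) < \<rho>1"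
        using I(5) rho1(1) by blast
      then show ?thesis using that gq by auto
    qed
    define rs where "rs = min rV rg"
    have rs: "rs > 0" using rV rg by (simp add: rs_def)
    define mb where "mb = min \<eta> (rs / (4 * t + 1))"
    have mb: "mb > 0" unfolding mb_def using eta rs tpos by simp
    have evP: "\<forall>\<^sub>F x in nhds q. norm (P x - P q) < rs / 2"
      using ev_contv[OF C1_cont[OF CP U_open] qU, of "rs / 2"] rs by simp
    have evm: "\<forall>\<^sub>F x in nhds q. \<bar>m x\<bar> < mb"
      using ev_cont[OF C1_cont[OF Cm U_open] qU mb] m_q by simp
    obtain \<rho> where rho: "\<rho> > 0" "\<And>x. dist x q < \<rho> \<Longrightarrow> Good x \<and> norm (P x - P q) < rs / 2 \<and> \<bar>m x\<bar> < mb"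
      using eventually_conj[OF evG eventually_conj[OF evP evm]] unfolding eventually_nhds_metric by blast
    show ?thesis
    proof (intro exI conjI ballI impI)
      show "\<rho> > 0" by (rule rho(1))
      show "ball q \<rho> \<subseteq> U'" using rho(2) by (auto simp: Good_def dist_commute)
      fix p assume pb: "p \<in> ball q \<rho>" and pF: "F p = 0" and pl: "ll p = 0"
      show "m p = 0"
      proof (rule ccontr)
        assume mu0: "m p \<noteq> 0"
        define \<mu> where "\<mu> = m p"
        have mu: "\<mu> \<noteq> 0" using mu0 by (simp add: \<mu>_def)
        have Gp: "Good p" "norm (P p - P q) < rs / 2" "\<bar>\<mu>\<bar> < mb"
          using rho(2)[of p] pb by (auto simp: dist_commute \<mu>_def)
        have pU': "p \<in> U'" using Gp(1) by (simp add: Good_def)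
        define Y where "Y = 2 * t * \<mu>"
        define e2 where "e2 = (axis 2 1 :: real^3)"
        have ne2: "norm e2 = 1" by (simp add: e2_def)
        define zs where "zs s = P p + s *\<^sub>R (Y *\<^sub>R e2)" for s
        have Ybd: "\<bar>Y\<bar> < rs / 2"
        proof -
          have "\<bar>\<mu>\<bar> < rs / (4 * t + 1)" using Gp(3) by (simp add: mb_def)
          then have "\<bar>\<mu>\<bar> * (4 * t + 1) < rs" using tpos by (simp add: field_simps)
          then show ?thesis unfolding Y_def using tpos by (simp add: abs_mult field_simps)
        qed
        have zs_in: "zs s \<in> V" "dist (zs s) (P q) < rg" if s: "s \<in> {0..1}" for s
        proof -
          have "dist (zs s) (P q) = norm ((P p - P q) + (s * Y) *\<^sub>R e2)"
            unfolding zs_def dist_norm by (simp add: algebra_simps)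
          also have "\<dots> \<le> norm (P p - P q) + \<bar>s * Y\<bar>" using ne2 by (metis norm_scaleR norm_triangle_ineq mult.right_neutral)
          also have "\<bar>s * Y\<bar> \<le> \<bar>Y\<bar>" using s by (auto simp: abs_mult mult_le_cancel_right1 intro: mult_left_le_one_le)
          finally have "dist (zs s) (P q) < rs" using Gp(2) Ybd by linarith
          then show "zs s \<in> V" "dist (zs s) (P q) < rg" using rV(2) by (auto simp: rs_def dist_commute)
        qed
        have gz: "g (zs s) \<in> U'" "P (g (zs s)) = zs s" "Good (g (zs s))" if s: "s \<in> {0..1}" for s
          using hom3 hom2 zs_in[OF s] rg(2) rho1(2) by auto
        define \<phi> where "\<phi> s = m (g (zs s))" for s
        have phi0: "\<phi> 0 = \<mu>" unfolding \<phi>_def zs_def using hom1[OF pU'] by (simp add: \<mu>_def)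
        have dphi: "(\<phi> has_real_derivative Y * Dm (g (zs s)) (g' (zs s) e2)) (at s)" if s: "s \<in> {0..1}" for s
        proof -
          have dg: "(g has_derivative g' (zs s)) (at (zs s))" using I(7) zs_in[OF s] by blast
          have dm: "(m has_derivative Dm (g (zs s))) (at (g (zs s)))"
            using C1_at[OF Cm] gz(1)[OF s] U'U by auto
          have "((\<lambda>y. m (g y)) has_derivative (\<lambda>h. Dm (g (zs s)) (g' (zs s) h))) (at (zs s))"
            using has_derivative_compose[OF dg dm] by (simp add: o_def)
          then have "((\<lambda>y. m (g y)) has_derivative (\<lambda>h. Dm (g (zs s)) (g' (zs s) h))) (at (P p + s *\<^sub>R (Y *\<^sub>R e2)))"
            by (simp add: zs_def)
          from line_deriv[OF this] have "((\<lambda>s. m (g (P p + s *\<^sub>R (Y *\<^sub>R e2)))) has_real_derivative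
              Dm (g (zs s)) (g' (zs s) (Y *\<^sub>R e2))) (at s)" .
          moreover have "Dm (g (zs s)) (g' (zs s) (Y *\<^sub>R e2)) = Y * Dm (g (zs s)) (g' (zs s) e2)"
          proof -
            have "linear (g' (zs s))" using dg has_derivative_linear by blast
            moreover have "linear (Dm (g (zs s)))" using dm has_derivative_linear by blast
            ultimately show ?thesis by (simp add: linear_scale)
          qed
          ultimately show ?thesis unfolding \<phi>_def zs_def by simp
        qed
        have bd: "\<bar>Dm (g (zs s)) (g' (zs s) e2)\<bar> \<le> 1 / (4 * t)" if s: "s \<in> {0..1}" for s
        proof -
          define x where "x = g (zs s)"
          define k where "k = g' (zs s) e2"
          have Gx: "Good x" using gz(3)[OF s] by (simp add: x_def)
          have DPk: "DP x k = e2" using I(8)[OF zs_in(1)[OF s]] by (simp add: x_def k_def)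
          have DFk: "DF x k = 0" using arg_cong[OF DPk, of "\<lambda>v. v $ 1"] by (simp add: DP_def e2_def)
          have kb: "c * norm k \<le> 1" using I(10)[OF gz(1)[OF s], of k] DPk ne2 by (simp add: x_def)
          have kb': "norm k \<le> 1 / c" using kb I(9) by (simp add: field_simps)
          have "\<bar>DF q k\<bar> \<le> eps2 * norm k" using Gx DFk unfolding Good_def by (metis real_norm_def norm_minus_commute diff_zero)
          then have "\<bar>Dm q k\<bar> \<le> \<bar>c0\<bar> * (eps2 * norm k)" unfolding c0 abs_mult by (simp add: mult_left_mono)
          moreover have "\<bar>Dm x k - Dm q k\<bar> \<le> eps1 * norm k" using Gx unfolding Good_def by (metis real_norm_def)
          ultimately have "\<bar>Dm x k\<bar> \<le> (\<bar>c0\<bar> * eps2 + eps1) * norm k" by (simp add: algebra_simps)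
          also have "\<dots> \<le> (\<bar>c0\<bar> * eps2 + eps1) * (1 / c)"
            using kb' eps1 eps2 by (intro mult_left_mono) auto
          also have "\<bar>c0\<bar> * eps2 \<le> c / (8 * t)"
          proof -
            have "\<bar>c0\<bar> * eps2 = c / (8 * t) * (\<bar>c0\<bar> / (\<bar>c0\<bar> + 1))" unfolding eps2_def by (simp add: field_simps)
            also have "\<dots> \<le> c / (8 * t) * 1"
              using c01 I(9) tpos by (intro mult_left_mono) (auto simp: divide_le_eq)
            finally show ?thesis by simp
          qed
          then have "(\<bar>c0\<bar> * eps2 + eps1) * (1 / c) \<le> (c / (8 * t) + c / (8 * t)) * (1 / c)"
            unfolding eps1_def using I(9) by (intro mult_right_mono) auto
          also have "\<dots> = 1 / (4 * t)" using I(9) tpos by (simp add: field_simps)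
          finally show ?thesis by (simp add: x_def k_def)
        qed
        have near: "\<bar>\<phi> s - \<mu>\<bar> \<le> \<bar>\<mu>\<bar> / 2" if s: "s \<in> {0..1}" for s
        proof (cases "s = 0")
          case True then show ?thesis using phi0 by simp
        next
          case False
          then have s0: "0 < s" using s by auto
          obtain \<xi> where xi: "0 < \<xi>" "\<xi> < s" "\<phi> s - \<phi> 0 = (s - 0) * (Y * Dm (g (zs \<xi>)) (g' (zs \<xi>) e2))"
            using MVT2[of 0 s \<phi> "\<lambda>s. Y * Dm (g (zs s)) (g' (zs s) e2)"] s0 dphi s by force
          have xi01: "\<xi> \<in> {0..1}" using xi s by auto
          have "\<bar>\<phi> s - \<mu>\<bar> = s * (\<bar>Y\<bar> * \<bar>Dm (g (zs \<xi>)) (g' (zs \<xi>) e2)\<bar>)"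
            using xi(3) phi0 s0 by (simp add: abs_mult)
          also have "\<dots> \<le> 1 * (\<bar>Y\<bar> * (1 / (4 * t)))"
            using s bd[OF xi01] by (intro mult_mono) (auto intro: mult_left_mono)
          also have "\<dots> = \<bar>\<mu>\<bar> / 2" unfolding Y_def using tpos by (simp add: abs_mult field_simps)
          finally show ?thesis .
        qed
        have phicont: "continuous_on {0..1} \<phi>"
          using dphi by (intro continuous_at_imp_continuous_on ballI DERIV_isCont) blast
        have lz: "ll (g (zs s)) = s * Y" and Fz: "F (g (zs s)) = 0" if s: "s \<in> {0..1}" for s
        proof -
          have "P (g (zs s)) $ 2 = zs s $ 2" "P (g (zs s)) $ 1 = zs s $ 1" using gz(2)[OF s] by simp_all
          then show "ll (g (zs s)) = s * Y" "F (g (zs s)) = 0"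
            using pl pF by (simp_all add: P_def zs_def e2_def)
        qed
        define \<psi> where "\<psi> s = \<mu> * (s * Y - t * \<phi> s)" for s
        have psicont: "continuous_on {0..1} \<psi>" unfolding \<psi>_def[abs_def] by (intro continuous_intros phicont)
        have "\<psi> 0 = - (t * \<mu>\<^sup>2)" unfolding \<psi>_def phi0 by (simp add: power2_eq_square algebra_simps)
        then have psi0: "\<psi> 0 \<le> 0" using tpos by simp
        have psi1: "0 \<le> \<psi> 1"
        proof -
          have n1: "\<bar>\<phi> 1 - \<mu>\<bar> \<le> \<bar>\<mu>\<bar> / 2" using near by simp
          have "\<mu> * (\<phi> 1 - \<mu>) \<le> \<bar>\<mu>\<bar> * (\<bar>\<mu>\<bar> / 2)"
            using n1 by (metis abs_ge_self abs_mult abs_ge_zero mult_left_mono order_trans)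
          then have h1: "\<mu> * (\<phi> 1 - \<mu>) \<le> \<mu> * \<mu> / 2" by (simp add: abs_mult_self)
          have h2: "\<mu> * (\<phi> 1 - \<mu>) = \<mu> * \<phi> 1 - \<mu> * \<mu>" by (simp add: right_diff_distrib)
          have h3: "\<mu> * \<mu> \<ge> 0" by simp
          have "\<mu> * \<phi> 1 \<le> 2 * (\<mu> * \<mu>)" using h1 h2 h3 by linarith
          then have "0 \<le> t * (2 * (\<mu> * \<mu>) - \<mu> * \<phi> 1)" using tpos by simp
          then show ?thesis unfolding \<psi>_def Y_def by (simp add: algebra_simps)
        qed
        obtain s where s: "0 \<le> s" "s \<le> 1" "\<psi> s = 0" using IVT'[OF psi0 psi1 _ psicont] by auto
        have s01: "s \<in> {0..1}" using s by simp
        define ps where "ps = g (zs s)"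
        have Gps: "Good ps" and psU': "ps \<in> U'" using gz[OF s01] by (simp_all add: ps_def)
        have psU: "ps \<in> U" using psU' U'U by auto
        have mps: "m ps = \<phi> s" by (simp add: ps_def \<phi>_def)
        have lps: "ll ps = t * m ps" using s(3) mu lz[OF s01] unfolding \<psi>_def mps by (simp add: ps_def)
        have Fps: "F ps = 0" using Fz[OF s01] by (simp add: ps_def)
        have mps_b: "\<bar>m ps - \<mu>\<bar> \<le> \<bar>\<mu>\<bar> / 2" using near[OF s01] mps by simp
        have mps0: "m ps \<noteq> 0" using mps_b mu by auto
        have mps_le: "\<bar>m ps\<bar> \<le> 3 / 2 * \<bar>\<mu>\<bar>" using mps_b by linarith
        define sc where "sc = m ps / N2"
        have sc0: "sc \<noteq> 0" using mps0 N2 by (simp add: sc_def)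
        have aps: "a ps = sc * xt"
        proof -
          have "N2 * a ps = m ps * xt" using aN[of ps] lps unfolding xt_def by (simp add: algebra_simps)
          then show ?thesis unfolding sc_def using N2 by (simp add: field_simps)
        qed
        have bps: "b ps = sc * yt"
        proof -
          have "N2 * b ps = m ps * yt" using bN[of ps] lps unfolding yt_def by (simp add: algebra_simps)
          then show ?thesis unfolding sc_def using N2 by (simp add: field_simps)
        qed
        have D1: "sqrt ((a ps)\<^sup>2 + (b ps)\<^sup>2) \<noteq> 0"
        proof -
          have "(a ps)\<^sup>2 + (b ps)\<^sup>2 = sc\<^sup>2 * R2" unfolding aps bps R2_def by (simp add: power_mult_distrib algebra_simps)
          moreover have "sc\<^sup>2 > 0" using sc0 by simp
          ultimately show ?thesis using R2pos by simp
        qed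
        have eq: "(K11 ps * (b ps)\<^sup>2 + K22 ps * (a ps)\<^sup>2 - a ps * b ps * (K21 ps + K12 ps)) / (sqrt ((a ps)\<^sup>2 + (b ps)\<^sup>2)) ^ 3
             + (c2 ps * a ps - c1 ps * b ps) / sqrt ((a ps)\<^sup>2 + (b ps)\<^sup>2) = 0"
        proof -
          have "(vf_apply X1 a ps * (b ps)\<^sup>2 + vf_apply X2 b ps * (a ps)\<^sup>2 -
             a ps * b ps * (vf_apply X1 b ps + vf_apply X2 a ps)) / (sqrt ((a ps)\<^sup>2 + (b ps)\<^sup>2)) ^ 3
             + (c2 ps * a ps - c1 ps * b ps) / sqrt ((a ps)\<^sup>2 + (b ps)\<^sup>2) = 0"
            using minimal psU Fps D1 unfolding Delta_minimal_def Let_def by blast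
          then show ?thesis unfolding vfK[OF psU] .
        qed
        have cb: "\<bar>c1 ps\<bar> \<le> B" "\<bar>c2 ps\<bar> \<le> B" using Gps by (simp_all add: Good_def)
        have R2xy: "xt\<^sup>2 + yt\<^sup>2 > 0" using R2pos by (simp add: R2_def)
        have up: "\<bar>Qp ps\<bar> \<le> R2 * B * \<bar>sc\<bar> * W"
          using minimal_core[OF aps bps sc0 R2xy eq cb] unfolding Qp_eq R2_def W_def .
        have low: "\<bar>Qp ps\<bar> > \<bar>Q0\<bar> / 2" using Gps unfolding Good_def by linarith
        have scb: "\<bar>sc\<bar> * N2 < 3 / 2 * \<eta>"
        proof -
          have "\<bar>sc\<bar> * N2 = \<bar>m ps\<bar>" unfolding sc_def using N2 by (simp add: abs_div)
          also have "\<dots> \<le> 3 / 2 * \<bar>\<mu>\<bar>" by (rule mps_le)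
          also have "\<dots> < 3 / 2 * \<eta>" using Gp(3) mu unfolding mb_def by simp
          finally show ?thesis .
        qed
        define Z where "Z = R2 * (B + 1) * (W + 1)"
        have Zpos: "Z > 0" unfolding Z_def using R2pos B0 W0 by (simp add: add_pos_nonneg)
        have "R2 * B * \<bar>sc\<bar> * W \<le> Z * \<bar>sc\<bar>"
        proof -
          have "B * W \<le> (B + 1) * (W + 1)" using B0 W0 by (simp add: algebra_simps)
          then have "(R2 * \<bar>sc\<bar>) * (B * W) \<le> (R2 * \<bar>sc\<bar>) * ((B + 1) * (W + 1))"
            using R2pos by (intro mult_left_mono) auto
          then show ?thesis unfolding Z_def by (simp add: algebra_simps)
        qed
        moreover have "Z * \<bar>sc\<bar> < 3 / 8 * \<bar>Q0\<bar>"
        proof -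
          have "Z * (\<bar>sc\<bar> * N2) < Z * (3 / 2 * \<eta>)" using scb Zpos by simp
          also have "Z * \<eta> = \<bar>Q0\<bar> * N2 / 4"
          proof -
            have "4 * R2 * (B + 1) * (W + 1) = 4 * Z" unfolding Z_def by simp
            then have "Z * \<eta> = Z * (\<bar>Q0\<bar> * N2 / (4 * Z))" unfolding \<eta>_def by simp
            also have "\<dots> = \<bar>Q0\<bar> * N2 / 4" using Zpos by simp
            finally show ?thesis .
          qed
          then have "Z * (3 / 2 * \<eta>) = 3 / 8 * \<bar>Q0\<bar> * N2" by (simp add: algebra_simps)
          finally have "(Z * \<bar>sc\<bar>) * N2 < (3 / 8 * \<bar>Q0\<bar>) * N2" by (simp add: algebra_simps)
          then show ?thesis using N2 by simp
        qed
        ultimately show False using up low by linarith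
      qed
    qed
  qed

  then obtain \<rho> where rho: "\<rho> > 0" "ball q \<rho> \<subseteq> U'" "\<And>p. p \<in> ball q \<rho> \<Longrightarrow> F p = 0 \<Longrightarrow> ll p = 0 \<Longrightarrow> m p = 0"
    by blast
  obtain e0 where e0: "e0 > 0" "ball (P q) e0 \<subseteq> V" using I(4,5) open_contains_ball by blast
  obtain e1 where e1: "e1 > 0" "\<And>z. z \<in> V \<Longrightarrow> dist z (P q) < e1 \<Longrightarrow> dist (g z) q < \<rho>"
  proof -
    have "\<forall>x\<in>V. \<forall>\<epsilon>>0. \<exists>\<delta>>0. \<forall>x'\<in>V. dist x' x < \<delta> \<longrightarrow> dist (g x') (g x) < \<epsilon>"
      using hom4 unfolding continuous_on_iff .
    then obtain d where "d > 0" "\<forall>x'\<in>V. dist x' (P q) < d \<longrightarrow> dist (g x') (g (P q)) < \<rho>"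
      using I(5) rho(1) by blast
    then show ?thesis using that gq by auto
  qed
  define e where "e = min e0 e1"
  have epos: "e > 0" using e0 e1 by (simp add: e_def)
  define e3 where "e3 = (axis 3 1 :: real^3)"
  have ne3: "norm e3 = 1" unfolding e3_def by simp
  define z where "z s = P q + s *\<^sub>R e3" for s
  define \<gamma> where "\<gamma> s = g (z s)" for s
  define S where "S = {-e<..<e}"
  have zV: "z s \<in> V" "dist (z s) (P q) < e1" if "s \<in> S" for s
  proof -
    have d: "dist (z s) (P q) = \<bar>s\<bar>" unfolding z_def dist_norm using ne3 by simp
    have "\<bar>s\<bar> < e" using that by (auto simp: S_def)
    then show "z s \<in> V" "dist (z s) (P q) < e1" using d e0(2) by (auto simp: e_def dist_commute)
  qed
  have gU': "\<gamma> s \<in> U'" and Pg: "P (\<gamma> s) = z s" and gball: "dist (\<gamma> s) q < \<rho>" if "s \<in> S" for s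
    using hom3 hom2 e1(2) zV[OF that] by (auto simp: \<gamma>_def)
  have gchar: "\<gamma> s \<in> char_points U X1 X2 F" if s: "s \<in> S" for s
  proof -
    have gU: "\<gamma> s \<in> U" using gU'[OF s] U'U by auto
    have "P (\<gamma> s) $ 1 = F q" "P (\<gamma> s) $ 2 = ll q" using Pg[OF s] by (simp_all add: z_def e3_def P_def)
    then have F0: "F (\<gamma> s) = 0" and l0: "ll (\<gamma> s) = 0" using q0 ll_q by (simp_all add: P_def)
    have "\<gamma> s \<in> ball q \<rho>" using gball[OF s] by (simp add: dist_commute)
    then have m0: "m (\<gamma> s) = 0" using rho(3) F0 l0 by blast
    have "N2 * a (\<gamma> s) = 0" "N2 * b (\<gamma> s) = 0" using aN[of "\<gamma> s"] bN[of "\<gamma> s"] l0 m0 by simp_all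
    then have "a (\<gamma> s) = 0" "b (\<gamma> s) = 0" using N2 by simp_all
    then show ?thesis using gU F0 by (simp add: char_points_def)
  qed
  have g0: "\<gamma> 0 = q" unfolding \<gamma>_def z_def using gq by simp
  have zder: "(z has_derivative (\<lambda>h. h *\<^sub>R e3)) (at s)" for s
    unfolding z_def by (auto intro!: derivative_eq_intros)
  have gder: "(\<gamma> has_vector_derivative g' (z s) e3) (at s)" if s: "s \<in> S" for s
  proof -
    have d: "(g has_derivative g' (z s)) (at (z s))" using I(7) zV[OF s] by blast
    have l: "linear (g' (z s))" using d has_derivative_linear by blast
    have "((\<lambda>s. g (z s)) has_derivative (\<lambda>h. g' (z s) (h *\<^sub>R e3))) (at s)"
      using has_derivative_compose[OF zder d] by (simp add: o_def)
    then show ?thesis unfolding has_vector_derivative_def \<gamma>_def using l by (simp add: linear_scale)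
  qed
  have DPg: "DP (\<gamma> s) (g' (z s) e3) = e3" if s: "s \<in> S" for s
    using I(8)[OF zV(1)[OF s]] by (simp add: \<gamma>_def)
  have nz: "g' (z s) e3 \<noteq> 0" if s: "s \<in> S" for s
  proof
    assume "g' (z s) e3 = 0"
    moreover have "linear (DP (\<gamma> s))" using C1_linear[OF CP] gU'[OF s] U'U by auto
    ultimately have "DP (\<gamma> s) (g' (z s) e3) = 0" by (simp add: linear_0)
    then show False using DPg[OF s] unfolding e3_def by (simp add: axis_eq_0_iff)
  qed
  have Sopen: "open S" unfolding S_def by simp
  have gcont: "continuous_on S \<gamma>"
  proof -
    have "continuous_on S z" unfolding z_def by (intro continuous_intros)
    moreover have "z ` S \<subseteq> V" using zV by auto
    ultimately show ?thesis unfolding \<gamma>_def[abs_def] using continuous_on_compose2[OF hom4] by blast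
  qed
  have dcont: "continuous_on S (\<lambda>s. g' (z s) e3)"
  proof -
    have "continuous (at s0 within S) (\<lambda>s. g' (z s) e3)" if s0: "s0 \<in> S" for s0
    proof (rule sol_cont[of S "\<lambda>s. DP (\<gamma> s)" "\<lambda>s. g' (z s) e3" e3 c s0])
      show "\<And>t. t \<in> S \<Longrightarrow> DP (\<gamma> t) (g' (z t) e3) = e3" using DPg by blast
      show "\<And>t h. t \<in> S \<Longrightarrow> c * norm h \<le> norm (DP (\<gamma> t) h)" using I(10) gU' by blast
      show "c > 0" using I(9) .
      show "s0 \<in> S" using s0 .
      show "linear (DP (\<gamma> s0))" using C1_linear[OF CP] gU'[OF s0] U'U by auto
      fix eps :: real assume eps: "eps > 0"
      have ev: "\<forall>\<^sub>F y in nhds (\<gamma> s0). y \<in> U \<and> (\<forall>h. norm (DP y h - DP (\<gamma> s0) h) \<le> eps * norm h)"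
        using opcont[OF CP U_open _ eps] gU'[OF s0] U'U by auto
      have "(\<gamma> \<longlongrightarrow> \<gamma> s0) (at s0 within S)"
        using gcont s0 Sopen by (simp add: continuous_on_eq_continuous_within continuous_within)
      from eventually_compose_filterlim[OF ev this]
      show "\<forall>\<^sub>F t in at s0 within S. \<forall>h. norm (DP (\<gamma> t) h - DP (\<gamma> s0) h) \<le> eps * norm h"
        by (rule eventually_mono) blast
    qed
    then show ?thesis using continuous_on_eq_continuous_within by blast
  qed
  have C1g: "\<gamma> C1_differentiable_on S"
    unfolding C1_differentiable_on_def
    by (intro exI[of _ "\<lambda>s. g' (z s) e3"] conjI ballI gder dcont) (simp_all add: gder dcont)
  have vd: "vector_derivative \<gamma> (at s) = g' (z s) e3" if "s \<in> S" for s
    using vector_derivative_at[OF gder[OF that]] .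
  define Vs where "Vs = U' \<inter> {p. \<bar>\<sigma> p - \<sigma> q\<bar> < e}"
  have Vs_open: "open Vs"
  proof -
    have "open {p. \<bar>\<sigma> p - \<sigma> q\<bar> < e}" unfolding \<sigma>_def
      by (rule open_Collect_less) (intro continuous_intros)+
    then show ?thesis unfolding Vs_def using I(1) by auto
  qed
  have cover: "char_points U X1 X2 F \<inter> Vs \<subseteq> \<gamma> ` S"
  proof
    fix p assume p: "p \<in> char_points U X1 X2 F \<inter> Vs"
    then have pU': "p \<in> U'" and pc: "F p = 0" "a p = 0" "b p = 0" and ps: "\<bar>\<sigma> p - \<sigma> q\<bar> < e"
      by (auto simp: Vs_def char_points_def)
    have "P p = z (\<sigma> p - \<sigma> q)"
      unfolding vec3_eq using pc q0 by (simp add: P_def z_def e3_def ll_def)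
    then have "p = \<gamma> (\<sigma> p - \<sigma> q)" using hom1[OF pU'] by (simp add: \<gamma>_def)
    moreover have "\<sigma> p - \<sigma> q \<in> S" using ps by (auto simp: S_def)
    ultimately show "p \<in> \<gamma> ` S" by blast
  qed
  show ?thesis
  proof (intro exI conjI)
    show "open Vs" by (rule Vs_open)
    show "q \<in> Vs" using I(2) epos by (simp add: Vs_def)
    show "e > 0" by (rule epos)
    show "\<gamma> 0 = q" by (rule g0)
    show "\<gamma> C1_differentiable_on {-e<..<e}" using C1g by (simp add: S_def)
    show "\<forall>t\<in>{- e<..<e}. vector_derivative \<gamma> (at t) \<noteq> 0 \<and> \<gamma> t \<in> char_points U X1 X2 F"
      using vd nz gchar by (simp add: S_def)
    show "char_points U X1 X2 F \<inter> Vs \<subseteq> \<gamma> ` {- e<..<e}" using cover by (simp add: S_def)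
  qed
qed
end

theorem mainTheorem8:
  fixes U :: "(real^3) set"
    and X1 X2 X3 w :: "real^3 \<Rightarrow> real^3"
    and c1 c2 c3 F :: "real^3 \<Rightarrow> real"
  assumes U_open: "open U"
    and smooth: "smooth_on U X1" "smooth_on U X2" "smooth_on U X3" "smooth_on U w"
    and frame: "\<And>p a b. p \<in> U \<Longrightarrow> a *\<^sub>R X1 p + b *\<^sub>R X2 p = 0 \<Longrightarrow> a = 0 \<and> b = 0"
    and omega: "\<And>p. p \<in> U \<Longrightarrow> w p \<bullet> X1 p = 0 \<and> w p \<bullet> X2 p = 0 \<and> dform w p (X1 p) (X2 p) = 1"
    and reeb: "\<And>p. p \<in> U \<Longrightarrow> w p \<bullet> X3 p = 1 \<and> dform w p (X1 p) (X3 p) = 0 \<and> dform w p (X2 p) (X3 p) = 0"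
    and struct_fns: "\<And>p. p \<in> U \<Longrightarrow>
        lie_bracket X1 X2 p = - (c1 p *\<^sub>R X1 p + c2 p *\<^sub>R X2 p + c3 p *\<^sub>R X3 p)"
    and F_C2: "Ck_on 2 U F"
    and dF: "\<And>p. p \<in> U \<Longrightarrow> F p = 0 \<Longrightarrow> frechet_derivative F (at p) \<noteq> (\<lambda>v. 0)"
    and minimal: "Delta_minimal U X1 X2 c1 c2 F"
  shows "\<forall>q \<in> char_points U X1 X2 F.
           \<not> q islimpt (char_points U X1 X2 F)
         \<or> (\<exists>V e \<gamma>. open V \<and> q \<in> V \<and> e > 0 \<and> \<gamma> 0 = q
              \<and> \<gamma> C1_differentiable_on {-e<..<e}
              \<and> (\<forall>t\<in>{-e<..<e}. vector_derivative \<gamma> (at t) \<noteq> 0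
                                 \<and> \<gamma> t \<in> char_points U X1 X2 F)
              \<and> char_points U X1 X2 F \<inter> V \<subseteq> \<gamma> ` {-e<..<e})"
proof -
  interpret S: SR U X1 X2 X3 w c1 c2 c3 F
    by (rule SR.intro) (fact U_open smooth frame omega reeb struct_fns F_C2 dF minimal)+
  show ?thesis
  proof
    fix q assume q: "q \<in> char_points U X1 X2 F"
    show "\<not> q islimpt (char_points U X1 X2 F)
         \<or> (\<exists>V e \<gamma>. open V \<and> q \<in> V \<and> e > 0 \<and> \<gamma> 0 = q
              \<and> \<gamma> C1_differentiable_on {-e<..<e}
              \<and> (\<forall>t\<in>{-e<..<e}. vector_derivative \<gamma> (at t) \<noteq> 0
                                 \<and> \<gamma> t \<in> char_points U X1 X2 F)
              \<and> char_points U X1 X2 F \<inter> V \<subseteq> \<gamma> ` {-e<..<e})"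
    proof (cases "S.K11 q * S.K22 q - S.K12 q * S.K21 q = 0")
      case True
      then show ?thesis using S.rank1[OF q] by blast
    next
      case False
      then show ?thesis using S.rank2[OF q] by blast
    qed
  qed
qed

end
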